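(* Let $T$ be a tree of order at least $6$. Then $T\in\mathcal{O}'$ if and only if the set of weak support vertices of $T$ is a maximum $2$-packing in $T$.
   Context: A weak support vertex is a vertex adjacent to exactly one leaf. A $2$-packing of a graph $G$ is a set $S\subseteq V(G)$ whose vertices are pairwise at distance at least $3$; a maximum $2$-packing is one of maximum cardinality $\rho(G)$. $2$-subdivision: let $G$ be a connected graph of order at least $2$ and $\mathcal{P}=\{\mathcal{P}(v):v\in V(G)\}$ where $\mathcal{P}(v)$ is a partition of $N_G(v)$ (into nonempty blocks). $G(\mathcal{P})$ has vertex set $V(G)\cup(V(G)\times\{1\})\cup\bigcup_{v\in V(G)}(\{v\}\times\mathcal{P}(v))$ and edge set $E_1\cup E_2\cup E_3$, where $E_1=\{v(v,1):v\in V(G)\}$, $E_2=\{v(v,A): v\in V(G), A\in\mathcal{P}(v)\}$, and $E_3=\{(u,A)(v,B): uv\in E(G), A\in\mathcal{P}(u), B\in\mathcal{P}(v), v\in A, u\in B\}$. $\mathcal{O}'$ is the family of all trees isomorphic to some $R(\mathcal{P})$ where $R$ is a tree of order at least $2$ and $\mathcal{P}$ is such a family of partitions. *)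

theory Defs
  imports Main "HOL-Library.Extended_Nat" "HOL-Library.Disjoint_Sets"
begin

definition graph :: "'a set \<Rightarrow> 'a set set \<Rightarrow> bool" where
  "graph V E \<longleftrightarrow> finite V \<and> (\<forall>e\<in>E. \<exists>u v. e = {u, v} \<and> u \<noteq> v \<and> u \<in> V \<and> v \<in> V)"

definition walk :: "'a set \<Rightarrow> 'a set set \<Rightarrow> 'a list \<Rightarrow> bool" where
  "walk V E xs \<longleftrightarrow> xs \<noteq> [] \<and> set xs \<subseteq> V \<and>
     (\<forall>i. Suc i < length xs \<longrightarrow> {xs ! i, xs ! Suc i} \<in> E)"

definition connected_graph :: "'a set \<Rightarrow> 'a set set \<Rightarrow> bool" where
  "connected_graph V E \<longleftrightarrow>
     (\<forall>u\<in>V. \<forall>v\<in>V. \<exists>xs. walk V E xs \<and> hd xs = u \<and> last xs = v)"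

definition has_cycle :: "'a set \<Rightarrow> 'a set set \<Rightarrow> bool" where
  "has_cycle V E \<longleftrightarrow>
     (\<exists>xs. walk V E xs \<and> length xs \<ge> 3 \<and> distinct xs \<and> {last xs, hd xs} \<in> E)"

definition tree :: "'a set \<Rightarrow> 'a set set \<Rightarrow> bool" where
  "tree V E \<longleftrightarrow> graph V E \<and> V \<noteq> {} \<and> connected_graph V E \<and> \<not> has_cycle V E"

(* distance: length of a shortest walk (infinity if none) *)
definition gdist :: "'a set \<Rightarrow> 'a set set \<Rightarrow> 'a \<Rightarrow> 'a \<Rightarrow> enat" where
  "gdist V E u v = (INF xs \<in> {xs. walk V E xs \<and> hd xs = u \<and> last xs = v}. enat (length xs - 1))"

definition neighbors :: "'a set \<Rightarrow> 'a set set \<Rightarrow> 'a \<Rightarrow> 'a set" where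
  "neighbors V E v = {u \<in> V. {v, u} \<in> E}"

definition degree :: "'a set \<Rightarrow> 'a set set \<Rightarrow> 'a \<Rightarrow> nat" where
  "degree V E v = card (neighbors V E v)"

definition leaf :: "'a set \<Rightarrow> 'a set set \<Rightarrow> 'a \<Rightarrow> bool" where
  "leaf V E v \<longleftrightarrow> v \<in> V \<and> degree V E v = 1"

definition weak_supports :: "'a set \<Rightarrow> 'a set set \<Rightarrow> 'a set" where
  "weak_supports V E = {v \<in> V. card {u \<in> neighbors V E v. leaf V E u} = 1}"

definition two_packing :: "'a set \<Rightarrow> 'a set set \<Rightarrow> 'a set \<Rightarrow> bool" where
  "two_packing V E S \<longleftrightarrow> S \<subseteq> V \<and>
     (\<forall>u\<in>S. \<forall>v\<in>S. u \<noteq> v \<longrightarrow> gdist V E u v \<ge> 3)"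

definition max_two_packing :: "'a set \<Rightarrow> 'a set set \<Rightarrow> 'a set \<Rightarrow> bool" where
  "max_two_packing V E S \<longleftrightarrow> two_packing V E S \<and>
     (\<forall>S'. two_packing V E S' \<longrightarrow> card S' \<le> card S)"

(* vertices of the 2-subdivision G(P): v, (v,1), (v,A) *)
datatype 'a sv = Orig 'a | One 'a | Part 'a "'a set"

definition nbr_partitions :: "'a set \<Rightarrow> 'a set set \<Rightarrow> ('a \<Rightarrow> 'a set set) \<Rightarrow> bool" where
  "nbr_partitions V E P \<longleftrightarrow> (\<forall>v\<in>V. partition_on (neighbors V E v) (P v))"

definition subdiv_V :: "'a set \<Rightarrow> 'a set set \<Rightarrow> ('a \<Rightarrow> 'a set set) \<Rightarrow> 'a sv set" where
  "subdiv_V V E P = Orig ` V \<union> One ` V \<union> {Part v A | v A. v \<in> V \<and> A \<in> P v}"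

definition subdiv_E :: "'a set \<Rightarrow> 'a set set \<Rightarrow> ('a \<Rightarrow> 'a set set) \<Rightarrow> 'a sv set set" where
  "subdiv_E V E P =
     {{Orig v, One v} | v. v \<in> V}
   \<union> {{Orig v, Part v A} | v A. v \<in> V \<and> A \<in> P v}
   \<union> {{Part u A, Part v B} | u v A B. {u, v} \<in> E \<and> A \<in> P u \<and> B \<in> P v \<and> v \<in> A \<and> u \<in> B}"

definition graph_iso :: "'a set \<Rightarrow> 'a set set \<Rightarrow> 'b set \<Rightarrow> 'b set set \<Rightarrow> bool" where
  "graph_iso V E V' E' \<longleftrightarrow> (\<exists>f. bij_betw f V V' \<and>
     (\<forall>u\<in>V. \<forall>v\<in>V. {u, v} \<in> E \<longleftrightarrow> {f u, f v} \<in> E'))"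

(* membership in O': isomorphic to R(P) for a tree R of order >= 2 (vertices of R
   taken from nat without loss of generality, as R is finite) *)
definition in_O' :: "'a set \<Rightarrow> 'a set set \<Rightarrow> bool" where
  "in_O' V E \<longleftrightarrow> (\<exists>(R :: nat set) ER P. tree R ER \<and> card R \<ge> 2 \<and> nbr_partitions R ER P \<and>
      graph_iso V E (subdiv_V R ER P) (subdiv_E R ER P))"

end

theory Submission
  imports Defs
begin

lemma walk_single[simp]: "walk V E [x] \<longleftrightarrow> x \<in> V"
  unfolding walk_def by auto

lemma walk_Cons2[simp]: "walk V E (x # y # xs) \<longleftrightarrow> x \<in> V \<and> {x, y} \<in> E \<and> walk V E (y # xs)"
proof
  assume w: "walk V E (x # y # xs)"
  have "Suc 0 < length (x # y # xs)" by simp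
  then have "{(x # y # xs) ! 0, (x # y # xs) ! Suc 0} \<in> E" using w unfolding walk_def by blast
  then have "{x, y} \<in> E" by simp
  moreover
  have "\<forall>i. Suc i < length (y # xs) \<longrightarrow> {(y # xs) ! i, (y # xs) ! Suc i} \<in> E"
  proof (intro allI impI)
    fix i assume "Suc i < length (y # xs)"
    then have "Suc (Suc i) < length (x # y # xs)" by simp
    then have "{(x # y # xs) ! Suc i, (x # y # xs) ! Suc (Suc i)} \<in> E" using w[unfolded walk_def] by blast
    then show "{(y # xs) ! i, (y # xs) ! Suc i} \<in> E" by simp
  qed
  then have "walk V E (y # xs)" using w unfolding walk_def by auto
  ultimately show "x \<in> V \<and> {x, y} \<in> E \<and> walk V E (y # xs)" using w unfolding walk_def by auto
next
  assume a: "x \<in> V \<and> {x, y} \<in> E \<and> walk V E (y # xs)"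
  show "walk V E (x # y # xs)" unfolding walk_def
  proof (intro conjI allI impI)
    show "set (x # y # xs) \<subseteq> V" using a unfolding walk_def by auto
    fix i assume i: "Suc i < length (x # y # xs)"
    show "{(x # y # xs) ! i, (x # y # xs) ! Suc i} \<in> E"
    proof (cases i)
      case 0 then show ?thesis using a by simp
    next
      case (Suc j) then show ?thesis using a i unfolding walk_def by auto
    qed
  qed simp
qed

lemma walk_append:
  assumes "xs \<noteq> []" "ys \<noteq> []"
  shows "walk V E (xs @ ys) \<longleftrightarrow> walk V E xs \<and> walk V E ys \<and> {last xs, hd ys} \<in> E"
  using assms
proof (induction xs)
  case Nil then show ?case by simp
next
  case (Cons a xs)
  obtain b ys' where ys: "ys = b # ys'" using Cons.prems by (cases ys) auto
  show ?case
  proof (cases xs)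
    case Nil then show ?thesis using ys by auto
  next
    case (Cons c xs')
    then show ?thesis using Cons.IH[of] Cons.prems by (auto simp: ys)
  qed
qed

lemma walk_concat:
  assumes "segs \<noteq> []" "\<forall>s\<in>set segs. s \<noteq> [] \<and> walk V E s"
    "\<forall>i. Suc i < length segs \<longrightarrow> {last (segs ! i), hd (segs ! Suc i)} \<in> E"
  shows "walk V E (concat segs)"
  using assms
proof (induction segs)
  case Nil then show ?case by simp
next
  case (Cons s segs)
  show ?case
  proof (cases segs)
    case Nil then show ?thesis using Cons.prems by simp
  next
    case (Cons t segs')
    have p3: "\<forall>i. Suc i < length segs \<longrightarrow> {last (segs ! i), hd (segs ! Suc i)} \<in> E"
    proof (intro allI impI)
      fix i assume "Suc i < length segs"
      then show "{last (segs ! i), hd (segs ! Suc i)} \<in> E"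
        using Cons.prems(3)[rule_format, of "Suc i"] by simp
    qed
    have IH: "walk V E (concat segs)"
      using Cons.IH Cons.prems p3 \<open>segs = t # segs'\<close> by simp
    have e: "{last s, hd t} \<in> E" using Cons.prems(3)[rule_format, of 0] \<open>segs = t # segs'\<close> by simp
    have "concat (s # segs) = s @ concat segs" by simp
    moreover have "concat segs \<noteq> []" "hd (concat segs) = hd t"
      using Cons.prems \<open>segs = t # segs'\<close> by auto
    ultimately show ?thesis using walk_append[of s "concat segs" V E] IH e Cons.prems by auto
  qed
qed

lemma walk_stutter:
  assumes "xs \<noteq> []" "set xs \<subseteq> V"
    "\<forall>i. Suc i < length xs \<longrightarrow> xs ! i = xs ! Suc i \<or> {xs ! i, xs ! Suc i} \<in> E"
  shows "\<exists>ys. walk V E ys \<and> hd ys = hd xs \<and> last ys = last xs"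
  using assms
proof (induction xs)
  case Nil then show ?case by simp
next
  case (Cons a xs)
  show ?case
  proof (cases xs)
    case Nil then show ?thesis using Cons.prems by (intro exI[of _ "[a]"]) auto
  next
    case (Cons b xs')
    have p3: "\<forall>i. Suc i < length xs \<longrightarrow> xs ! i = xs ! Suc i \<or> {xs ! i, xs ! Suc i} \<in> E"
    proof (intro allI impI)
      fix i assume "Suc i < length xs"
      then show "xs ! i = xs ! Suc i \<or> {xs ! i, xs ! Suc i} \<in> E"
        using Cons.prems(3)[rule_format, of "Suc i"] by simp
    qed
    have "\<exists>ys. walk V E ys \<and> hd ys = hd xs \<and> last ys = last xs"
      using Cons.IH Cons.prems p3 \<open>xs = b # xs'\<close> by simp
    then obtain ys where ys: "walk V E ys" "hd ys = b" "last ys = last xs"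
      using \<open>xs = b # xs'\<close> by auto
    have ab: "a = b \<or> {a, b} \<in> E" using Cons.prems(3)[rule_format, of 0] \<open>xs = b # xs'\<close> by simp
    have yne: "ys \<noteq> []" using ys(1) unfolding walk_def by auto
    show ?thesis
    proof (cases "a = b")
      case True then show ?thesis using ys \<open>xs = b # xs'\<close> by (intro exI[of _ ys]) auto
    next
      case False
      then have "walk V E (a # ys)" using ab ys yne Cons.prems by (cases ys) auto
      then show ?thesis using ys yne \<open>xs = b # xs'\<close> by (intro exI[of _ "a # ys"]) auto
    qed
  qed
qed

definition cl :: "'a set \<Rightarrow> 'a set set \<Rightarrow> 'a \<Rightarrow> 'a \<Rightarrow> bool" where
  "cl V E u v \<longleftrightarrow> (u = v \<and> u \<in> V) \<or> (u \<in> V \<and> v \<in> V \<and> {u, v} \<in> E)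
     \<or> (\<exists>w\<in>V. u \<in> V \<and> v \<in> V \<and> {u, w} \<in> E \<and> {w, v} \<in> E)"

lemma cl_sym: "cl V E u v \<Longrightarrow> cl V E v u"
  unfolding cl_def by (auto simp: insert_commute)

lemma walk_short:
  assumes "walk V E xs" "length xs \<le> 3"
  shows "cl V E (hd xs) (last xs)"
proof -
  have ne: "xs \<noteq> []" using assms unfolding walk_def by auto
  consider (a) x where "xs = [x]" | (b) x y where "xs = [x, y]" | (c) x y z where "xs = [x, y, z]"
    using ne assms(2)
    by (cases xs; cases "tl xs"; cases "tl (tl xs)"; auto)
  then show ?thesis
  proof cases
    case a then show ?thesis using assms unfolding cl_def by simp
  next
    case b then show ?thesis using assms unfolding cl_def by simp
  next
    case c then show ?thesis using assms unfolding cl_def by auto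
  qed
qed

lemma gdist_ge3: "3 \<le> gdist V E u v \<longleftrightarrow> \<not> cl V E u v"
proof
  assume g: "3 \<le> gdist V E u v"
  have all: "\<And>xs. walk V E xs \<Longrightarrow> hd xs = u \<Longrightarrow> last xs = v \<Longrightarrow> 4 \<le> length xs"
  proof -
    fix xs assume "walk V E xs" "hd xs = u" "last xs = v"
    then have "3 \<le> enat (length xs - 1)" using g unfolding gdist_def by (auto simp: le_INF_iff)
    then show "4 \<le> length xs" by (simp add: numeral_eq_enat)
  qed
  show "\<not> cl V E u v"
  proof
    assume "cl V E u v"
    then consider "u = v" "u \<in> V" | "u \<in> V" "v \<in> V" "{u, v} \<in> E"
      | w where "w \<in> V" "u \<in> V" "v \<in> V" "{u, w} \<in> E" "{w, v} \<in> E"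
      unfolding cl_def by blast
    then show False
    proof cases
      case 1 then show False using all[of "[u]"] by simp
    next
      case 2 then show False using all[of "[u, v]"] by simp
    next
      case 3 then show False using all[of "[u, w, v]"] by simp
    qed
  qed
next
  assume n: "\<not> cl V E u v"
  show "3 \<le> gdist V E u v" unfolding gdist_def
  proof (rule INF_greatest)
    fix xs assume "xs \<in> {xs. walk V E xs \<and> hd xs = u \<and> last xs = v}"
    then have w: "walk V E xs" "hd xs = u" "last xs = v" by auto
    have "\<not> length xs \<le> 3" using walk_short[OF w(1)] w n by auto
    then show "3 \<le> enat (length xs - 1)" by (simp add: numeral_eq_enat)
  qed
qed

lemma two_packing_cl:
  "two_packing V E S \<longleftrightarrow> S \<subseteq> V \<and> (\<forall>u\<in>S. \<forall>v\<in>S. u \<noteq> v \<longrightarrow> \<not> cl V E u v)"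
  unfolding two_packing_def gdist_ge3 by simp

lemma graph_edge:
  assumes "graph V E" "{u, v} \<in> E"
  shows "u \<in> V" "v \<in> V" "u \<noteq> v"
  using assms unfolding graph_def by (auto simp: doubleton_eq_iff)

lemma card_ne1: "x \<in> A \<Longrightarrow> y \<in> A \<Longrightarrow> x \<noteq> y \<Longrightarrow> card A \<noteq> 1"
  by (metis card_1_singletonE singletonD)

lemma tree_no_cycle:
  assumes "tree V E" "walk V E xs" "distinct xs" "length xs \<ge> 3" "{last xs, hd xs} \<in> E"
  shows False
  using assms unfolding tree_def has_cycle_def by blast


section \<open>The 2-subdivision\<close>

lemma sE_OO: "{Orig a, Orig b} \<notin> subdiv_E R ER P"
  unfolding subdiv_E_def by (auto simp: doubleton_eq_iff)
lemma sE_O1: "{Orig a, One b} \<in> subdiv_E R ER P \<longleftrightarrow> a = b \<and> a \<in> R"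
  unfolding subdiv_E_def by (auto simp: doubleton_eq_iff)
lemma sE_1O: "{One b, Orig a} \<in> subdiv_E R ER P \<longleftrightarrow> a = b \<and> a \<in> R"
  unfolding subdiv_E_def by (auto simp: doubleton_eq_iff)
lemma sE_OP: "{Orig a, Part b B} \<in> subdiv_E R ER P \<longleftrightarrow> a = b \<and> a \<in> R \<and> B \<in> P a"
  unfolding subdiv_E_def by (auto simp: doubleton_eq_iff)
lemma sE_PO: "{Part b B, Orig a} \<in> subdiv_E R ER P \<longleftrightarrow> a = b \<and> a \<in> R \<and> B \<in> P a"
  unfolding subdiv_E_def by (auto simp: doubleton_eq_iff)
lemma sE_11: "{One a, One b} \<notin> subdiv_E R ER P"
  unfolding subdiv_E_def by (auto simp: doubleton_eq_iff)
lemma sE_1P: "{One a, Part b B} \<notin> subdiv_E R ER P"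
  unfolding subdiv_E_def by (auto simp: doubleton_eq_iff)
lemma sE_P1: "{Part b B, One a} \<notin> subdiv_E R ER P"
  unfolding subdiv_E_def by (auto simp: doubleton_eq_iff)
lemma sE_PP: "{Part a A, Part b B} \<in> subdiv_E R ER P \<longleftrightarrow>
    {a, b} \<in> ER \<and> A \<in> P a \<and> B \<in> P b \<and> b \<in> A \<and> a \<in> B"
proof
  assume "{Part a A, Part b B} \<in> subdiv_E R ER P"
  then obtain u v A' B' where h: "{Part a A, Part b B} = {Part u A', Part v B'}"
    "{u, v} \<in> ER" "A' \<in> P u" "B' \<in> P v" "v \<in> A'" "u \<in> B'"
    unfolding subdiv_E_def by (auto simp: doubleton_eq_iff)
  then consider "a = u" "A = A'" "b = v" "B = B'" | "a = v" "A = B'" "b = u" "B = A'"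
    by (auto simp: doubleton_eq_iff)
  then show "{a, b} \<in> ER \<and> A \<in> P a \<and> B \<in> P b \<and> b \<in> A \<and> a \<in> B"
    using h by cases (auto simp: insert_commute)
next
  assume "{a, b} \<in> ER \<and> A \<in> P a \<and> B \<in> P b \<and> b \<in> A \<and> a \<in> B"
  then show "{Part a A, Part b B} \<in> subdiv_E R ER P"
    unfolding subdiv_E_def by blast
qed

lemmas sE_simps = sE_OO sE_O1 sE_1O sE_OP sE_PO sE_11 sE_1P sE_P1 sE_PP

lemma sV_simps:
  "Orig a \<in> subdiv_V R ER P \<longleftrightarrow> a \<in> R"
  "One a \<in> subdiv_V R ER P \<longleftrightarrow> a \<in> R"
  "Part a A \<in> subdiv_V R ER P \<longleftrightarrow> a \<in> R \<and> A \<in> P a"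
  unfolding subdiv_V_def by auto

definition own :: "'a sv \<Rightarrow> 'a" where
  "own x = (case x of Orig v \<Rightarrow> v | One v \<Rightarrow> v | Part v A \<Rightarrow> v)"

lemma own_simps[simp]: "own (Orig v) = v" "own (One v) = v" "own (Part v A) = v"
  unfolding own_def by simp_all

locale D1 =
  fixes R :: "'b set" and ER :: "'b set set" and P :: "'b \<Rightarrow> 'b set set"
  assumes tr: "tree R ER" and c2: "card R \<ge> 2" and np: "nbr_partitions R ER P"
begin

abbreviation "V' \<equiv> subdiv_V R ER P"
abbreviation "E' \<equiv> subdiv_E R ER P"

lemma gr: "graph R ER" using tr unfolding tree_def by simp
lemma finR: "finite R" using gr unfolding graph_def by simp

lemma nbr_ex:
  assumes v: "v \<in> R" shows "\<exists>u. {v, u} \<in> ER"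
proof -
  have "\<exists>w\<in>R. w \<noteq> v"
  proof (rule ccontr)
    assume "\<not> (\<exists>w\<in>R. w \<noteq> v)"
    then have "R \<subseteq> {v}" by auto
    then have "card R \<le> 1" using card_mono[of "{v}" R] by simp
    then show False using c2 by simp
  qed
  then obtain w where w: "w \<in> R" "w \<noteq> v" by blast
  obtain xs where xs: "walk R ER xs" "hd xs = v" "last xs = w"
    using tr v w unfolding tree_def connected_graph_def by blast
  then obtain a ys where "xs = a # ys" unfolding walk_def by (cases xs) auto
  moreover then obtain b zs where "ys = b # zs" using xs w by (cases ys) auto
  ultimately show ?thesis using xs by auto
qed

lemma part: "v \<in> R \<Longrightarrow> partition_on (neighbors R ER v) (P v)"
  using np unfolding nbr_partitions_def by blast

lemma P_ex: assumes "v \<in> R" shows "\<exists>A. A \<in> P v"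
proof -
  obtain u where u: "{v, u} \<in> ER" using nbr_ex assms by blast
  then have "u \<in> neighbors R ER v" using graph_edge[OF gr u] unfolding neighbors_def by simp
  then show ?thesis using part[OF assms] unfolding partition_on_def by blast
qed

lemma blk_nbr: assumes "v \<in> R" "A \<in> P v" "u \<in> A" shows "{v, u} \<in> ER" "u \<in> R"
proof -
  have "u \<in> neighbors R ER v" using part[OF assms(1)] assms unfolding partition_on_def by blast
  then show "{v, u} \<in> ER" "u \<in> R" unfolding neighbors_def by auto
qed

lemma blk_back: assumes "v \<in> R" "A \<in> P v" "u \<in> A" shows "\<exists>B\<in>P u. v \<in> B"
proof -
  have "{u, v} \<in> ER" using blk_nbr[OF assms] by (simp add: insert_commute)
  then have "v \<in> neighbors R ER u" using graph_edge[OF gr] unfolding neighbors_def by auto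
  then show ?thesis using part[OF blk_nbr(2)[OF assms]] unfolding partition_on_def by blast
qed

lemma blk_ne: assumes "v \<in> R" "A \<in> P v" shows "\<exists>u. u \<in> A"
  using part[OF assms(1)] assms(2) unfolding partition_on_def by (metis all_not_in_conv)

lemma nbrs_One: "a \<in> R \<Longrightarrow> neighbors V' E' (One a) = {Orig a}"
  apply (rule set_eqI)
  subgoal for y by (cases y) (auto simp: neighbors_def sE_simps sV_simps)
  done

lemma leaf_One: "a \<in> R \<Longrightarrow> leaf V' E' (One a)"
  unfolding leaf_def degree_def by (simp add: nbrs_One sV_simps)

lemma not_leaf_Orig: assumes "a \<in> R" shows "\<not> leaf V' E' (Orig a)"
proof -
  obtain A where A: "A \<in> P a" using P_ex assms by blast
  have "One a \<in> neighbors V' E' (Orig a)" "Part a A \<in> neighbors V' E' (Orig a)"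
    using assms A by (auto simp: neighbors_def sE_simps sV_simps)
  then have "card (neighbors V' E' (Orig a)) \<noteq> 1" using card_ne1[of "One a" _ "Part a A"] by simp
  then show ?thesis unfolding leaf_def degree_def by simp
qed

lemma not_leaf_Part: assumes "a \<in> R" "A \<in> P a" shows "\<not> leaf V' E' (Part a A)"
proof -
  obtain b where b: "b \<in> A" using blk_ne assms by blast
  obtain B where B: "B \<in> P b" "a \<in> B" using blk_back[OF assms b] by blast
  have e: "{a, b} \<in> ER" "b \<in> R" using blk_nbr[OF assms b] by auto
  have "Orig a \<in> neighbors V' E' (Part a A)" "Part b B \<in> neighbors V' E' (Part a A)"
    using assms b B e by (auto simp: neighbors_def sE_simps sV_simps)
  then have "card (neighbors V' E' (Part a A)) \<noteq> 1" using card_ne1[of "Orig a" _ "Part b B"] by simp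
  then show ?thesis unfolding leaf_def degree_def by simp
qed

lemma weak_eq: "weak_supports V' E' = Orig ` R"
proof (rule set_eqI)
  fix x show "x \<in> weak_supports V' E' \<longleftrightarrow> x \<in> Orig ` R"
  proof (cases x)
    case (Orig a)
    show ?thesis
    proof (cases "a \<in> R")
      case True
      have "{u \<in> neighbors V' E' (Orig a). leaf V' E' u} = {One a}"
      proof (rule set_eqI)
        fix y show "y \<in> {u \<in> neighbors V' E' (Orig a). leaf V' E' u} \<longleftrightarrow> y \<in> {One a}"
          using True leaf_One not_leaf_Part
          by (cases y) (auto simp: neighbors_def sE_simps sV_simps)
      qed
      then show ?thesis using Orig True unfolding weak_supports_def by (simp add: sV_simps)
    next
      case False then show ?thesis using Orig unfolding weak_supports_def by (auto simp: sV_simps)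
    qed
  next
    case (One a)
    have "x \<notin> weak_supports V' E'"
    proof
      assume "x \<in> weak_supports V' E'"
      then have a: "a \<in> R" and c: "card {u \<in> neighbors V' E' (One a). leaf V' E' u} = 1"
        using One unfolding weak_supports_def by (auto simp: sV_simps)
      have "{u \<in> neighbors V' E' (One a). leaf V' E' u} = {}"
        using nbrs_One[OF a] not_leaf_Orig[OF a] by auto
      then show False using c by (metis card.empty zero_neq_one)
    qed
    then show ?thesis using One by auto
  next
    case (Part a A)
    have "x \<notin> weak_supports V' E'"
    proof
      assume "x \<in> weak_supports V' E'"
      then have a: "a \<in> R" "A \<in> P a" and c: "card {u \<in> neighbors V' E' (Part a A). leaf V' E' u} = 1"
        using Part unfolding weak_supports_def by (auto simp: sV_simps)
      have "{u \<in> neighbors V' E' (Part a A). leaf V' E' u} = {}"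
      proof (rule set_eqI)
        fix y show "y \<in> {u \<in> neighbors V' E' (Part a A). leaf V' E' u} \<longleftrightarrow> y \<in> {}"
          using a not_leaf_Orig not_leaf_Part graph_edge[OF gr]
          by (cases y) (auto simp: neighbors_def sE_simps sV_simps)
      qed
      then show False using c by (metis card.empty zero_neq_one)
    qed
    then show ?thesis using Part by auto
  qed
qed

lemma not_cl_OO: assumes "a \<in> R" "b \<in> R" "a \<noteq> b" shows "\<not> cl V' E' (Orig a) (Orig b)"
proof
  assume "cl V' E' (Orig a) (Orig b)"
  then obtain w where "{Orig a, w} \<in> E'" "{w, Orig b} \<in> E'"
    using assms unfolding cl_def by (auto simp: sE_simps)
  then show False using assms by (cases w) (auto simp: sE_simps)
qed

lemma cl_own: assumes "x \<in> V'" "y \<in> V'" "own x = own y" shows "cl V' E' x y"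
proof (cases "x = y")
  case True then show ?thesis using assms unfolding cl_def by simp
next
  case False
  let ?a = "own x"
  have a: "?a \<in> R" using assms(1) by (cases x) (auto simp: sV_simps)
  have O: "Orig ?a \<in> V'" using a by (simp add: sV_simps)
  have hx: "{Orig ?a, x} \<in> E' \<or> x = Orig ?a" using assms(1) by (cases x) (auto simp: sV_simps sE_simps)
  have hy: "{Orig ?a, y} \<in> E' \<or> y = Orig ?a" using assms by (cases y) (auto simp: sV_simps sE_simps)
  show ?thesis
  proof (cases "x = Orig ?a")
    case True
    then have "{x, y} \<in> E'" using hy False by auto
    then show ?thesis using assms(1,2) unfolding cl_def by blast
  next
    case xn: False
    show ?thesis
    proof (cases "y = Orig ?a")
      case True
      then have "{y, x} \<in> E'" using hx xn by auto
      then have "{x, y} \<in> E'" by (simp add: insert_commute)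
      then show ?thesis using assms(1,2) unfolding cl_def by blast
    next
      case False
      then have "{x, Orig ?a} \<in> E'" "{Orig ?a, y} \<in> E'" using hx hy xn by (auto simp: insert_commute)
      then show ?thesis using assms(1,2) O unfolding cl_def by blast
    qed
  qed
qed

lemma pack_Orig: "two_packing V' E' (Orig ` R)"
  unfolding two_packing_cl using not_cl_OO by (auto simp: sV_simps)

lemma pack_le: assumes "two_packing V' E' S" shows "card S \<le> card R"
proof -
  have S: "S \<subseteq> V'" and n: "\<forall>u\<in>S. \<forall>v\<in>S. u \<noteq> v \<longrightarrow> \<not> cl V' E' u v"
    using assms unfolding two_packing_cl by auto
  have "inj_on own S"
  proof (rule inj_onI)
    fix x y assume "x \<in> S" "y \<in> S" "own x = own y"
    then show "x = y" using cl_own[of x y] S n by blast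
  qed
  moreover have "own ` S \<subseteq> R"
  proof
    fix z assume "z \<in> own ` S"
    then obtain x where "x \<in> S" "z = own x" by blast
    then show "z \<in> R" using S by (cases x) (auto simp: sV_simps)
  qed
  ultimately show ?thesis using card_inj_on_le finR by blast
qed

end

section \<open>Isomorphism transfer\<close>

locale ISO =
  fixes V :: "'a set" and E :: "'a set set" and V' :: "'b set" and E' :: "'b set set" and f :: "'a \<Rightarrow> 'b"
  assumes bij: "bij_betw f V V'" and ed: "\<forall>u\<in>V. \<forall>v\<in>V. {u, v} \<in> E \<longleftrightarrow> {f u, f v} \<in> E'"
begin

lemma inj: "inj_on f V" using bij by (simp add: bij_betw_def)
lemma img: "f ` V = V'" using bij by (simp add: bij_betw_def)
lemma edge: "u \<in> V \<Longrightarrow> v \<in> V \<Longrightarrow> {f u, f v} \<in> E' \<longleftrightarrow> {u, v} \<in> E"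
  using ed by blast
lemma fin: "v \<in> V \<Longrightarrow> f v \<in> V'" using img by blast

lemma nbrs: assumes "v \<in> V" shows "neighbors V' E' (f v) = f ` neighbors V E v"
proof (rule set_eqI)
  fix y show "y \<in> neighbors V' E' (f v) \<longleftrightarrow> y \<in> f ` neighbors V E v"
  proof
    assume "y \<in> neighbors V' E' (f v)"
    then have y: "y \<in> V'" "{f v, y} \<in> E'" unfolding neighbors_def by auto
    then obtain u where u: "u \<in> V" "y = f u" using img by blast
    then have "{v, u} \<in> E" using y(2) edge[OF assms u(1)] by simp
    then have "u \<in> neighbors V E v" using u(1) unfolding neighbors_def by simp
    then show "y \<in> f ` neighbors V E v" using u(2) by blast
  next
    assume "y \<in> f ` neighbors V E v"
    then obtain u where u: "u \<in> V" "{v, u} \<in> E" "y = f u" unfolding neighbors_def by auto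
    then have "{f v, y} \<in> E'" using edge[OF assms u(1)] by simp
    then show "y \<in> neighbors V' E' (f v)" using fin[OF u(1)] u(3) unfolding neighbors_def by simp
  qed
qed

lemma nbrs_sub: "v \<in> V \<Longrightarrow> neighbors V E v \<subseteq> V" unfolding neighbors_def by auto

lemma leaf: assumes "v \<in> V" shows "leaf V' E' (f v) \<longleftrightarrow> leaf V E v"
proof -
  have "degree V' E' (f v) = degree V E v"
    unfolding degree_def nbrs[OF assms]
    by (rule card_image[OF inj_on_subset[OF inj nbrs_sub[OF assms]]])
  then show ?thesis unfolding leaf_def using assms fin by simp
qed

lemma weak: assumes "v \<in> V" shows "f v \<in> weak_supports V' E' \<longleftrightarrow> v \<in> weak_supports V E"
proof -
  have eq: "{u \<in> neighbors V' E' (f v). leaf V' E' u} = f ` {u \<in> neighbors V E v. leaf V E u}"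
  proof (rule set_eqI)
    fix y show "y \<in> {u \<in> neighbors V' E' (f v). leaf V' E' u} \<longleftrightarrow> y \<in> f ` {u \<in> neighbors V E v. leaf V E u}"
    proof
      assume "y \<in> {u \<in> neighbors V' E' (f v). leaf V' E' u}"
      then obtain u where u: "u \<in> neighbors V E v" "y = f u" "leaf V' E' y" using nbrs[OF assms] by auto
      then have "u \<in> V" using nbrs_sub[OF assms] by blast
      then have "leaf V E u" using leaf[of u] u by simp
      then show "y \<in> f ` {u \<in> neighbors V E v. leaf V E u}" using u by blast
    next
      assume "y \<in> f ` {u \<in> neighbors V E v. leaf V E u}"
      then obtain u where u: "u \<in> neighbors V E v" "y = f u" "leaf V E u" by blast
      then have "u \<in> V" using nbrs_sub[OF assms] by blast
      then have "leaf V' E' y" using leaf[of u] u by simp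
      then show "y \<in> {u \<in> neighbors V' E' (f v). leaf V' E' u}" using u nbrs[OF assms] by blast
    qed
  qed
  have "card {u \<in> neighbors V' E' (f v). leaf V' E' u} = card {u \<in> neighbors V E v. leaf V E u}"
  proof -
    have "{u \<in> neighbors V E v. leaf V E u} \<subseteq> V" using nbrs_sub[OF assms] by blast
    then show ?thesis unfolding eq by (rule card_image[OF inj_on_subset[OF inj]])
  qed
  then show ?thesis unfolding weak_supports_def using assms fin by simp
qed

lemma clf: assumes "u \<in> V" "v \<in> V" shows "cl V' E' (f u) (f v) \<longleftrightarrow> cl V E u v"
proof
  assume "cl V' E' (f u) (f v)"
  then consider "f u = f v" | "{f u, f v} \<in> E'" | w' where "w' \<in> V'" "{f u, w'} \<in> E'" "{w', f v} \<in> E'"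
    unfolding cl_def by blast
  then show "cl V E u v"
  proof cases
    case 1 then show ?thesis using assms inj unfolding cl_def inj_on_def by blast
  next
    case 2 then have "{u, v} \<in> E" using edge assms by blast
    then show ?thesis using assms unfolding cl_def by blast
  next
    case 3
    then obtain w where w: "w \<in> V" "w' = f w" using img by blast
    then have "{u, w} \<in> E" "{w, v} \<in> E" using 3 edge assms by auto
    then show ?thesis using w assms unfolding cl_def by blast
  qed
next
  assume "cl V E u v"
  then consider "u = v" | "{u, v} \<in> E" | w where "w \<in> V" "{u, w} \<in> E" "{w, v} \<in> E"
    unfolding cl_def by blast
  then show "cl V' E' (f u) (f v)"
  proof cases
    case 1 then show ?thesis using assms fin unfolding cl_def by simp
  next
    case 2 then have "{f u, f v} \<in> E'" using edge assms by blast
    then show ?thesis using assms fin unfolding cl_def by blast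
  next
    case 3
    then have "{f u, f w} \<in> E'" "{f w, f v} \<in> E'" using edge assms by auto
    then show ?thesis using 3 fin assms unfolding cl_def by blast
  qed
qed

lemma pack: assumes "S \<subseteq> V" shows "two_packing V' E' (f ` S) \<longleftrightarrow> two_packing V E S"
proof -
  have "f ` S \<subseteq> V'" using assms img by blast
  moreover have "(\<forall>u\<in>f ` S. \<forall>v\<in>f ` S. u \<noteq> v \<longrightarrow> \<not> cl V' E' u v) \<longleftrightarrow>
      (\<forall>u\<in>S. \<forall>v\<in>S. u \<noteq> v \<longrightarrow> \<not> cl V E u v)"
  proof
    assume h: "\<forall>u\<in>f ` S. \<forall>v\<in>f ` S. u \<noteq> v \<longrightarrow> \<not> cl V' E' u v"
    show "\<forall>u\<in>S. \<forall>v\<in>S. u \<noteq> v \<longrightarrow> \<not> cl V E u v"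
    proof (intro ballI impI)
      fix u v assume uv: "u \<in> S" "v \<in> S" "u \<noteq> v"
      then have "f u \<noteq> f v" using inj assms unfolding inj_on_def by blast
      then have "\<not> cl V' E' (f u) (f v)" using h uv by blast
      then show "\<not> cl V E u v" using clf uv assms by blast
    qed
  next
    assume h: "\<forall>u\<in>S. \<forall>v\<in>S. u \<noteq> v \<longrightarrow> \<not> cl V E u v"
    show "\<forall>u\<in>f ` S. \<forall>v\<in>f ` S. u \<noteq> v \<longrightarrow> \<not> cl V' E' u v"
    proof (intro ballI impI)
      fix u' v' assume uv: "u' \<in> f ` S" "v' \<in> f ` S" "u' \<noteq> v'"
      obtain u where u: "u \<in> S" "u' = f u" using uv(1) by auto
      obtain v where v: "v \<in> S" "v' = f v" using uv(2) by auto
      have "u \<noteq> v" using u v uv(3) by auto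
      then have "\<not> cl V E u v" using h u v by blast
      then show "\<not> cl V' E' u' v'" using clf[of u v] u v assms by auto
    qed
  qed
  ultimately show ?thesis unfolding two_packing_cl using assms by blast
qed

end

lemma dir1:
  assumes "in_O' V E"
  shows "max_two_packing V E (weak_supports V E)"
proof -
  obtain R :: "nat set" and ER P where h: "tree R ER" "card R \<ge> 2" "nbr_partitions R ER P"
    "graph_iso V E (subdiv_V R ER P) (subdiv_E R ER P)"
    using assms unfolding in_O'_def by blast
  interpret D1 R ER P using h by unfold_locales
  obtain f where f: "bij_betw f V V'" "\<forall>u\<in>V. \<forall>v\<in>V. {u, v} \<in> E \<longleftrightarrow> {f u, f v} \<in> E'"
    using h(4) unfolding graph_iso_def by blast
  interpret ISO V E V' E' f using f by unfold_locales
  let ?W = "weak_supports V E"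
  have Wsub: "?W \<subseteq> V" unfolding weak_supports_def by auto
  have fW: "f ` ?W = Orig ` R"
  proof
    show "f ` ?W \<subseteq> Orig ` R" using weak Wsub weak_eq by blast
  next
    show "Orig ` R \<subseteq> f ` ?W"
    proof
      fix x assume x: "x \<in> Orig ` R"
      then have "x \<in> V'" by (auto simp: sV_simps)
      then obtain v where v: "v \<in> V" "x = f v" using img by blast
      then have "v \<in> ?W" using weak[OF v(1)] x weak_eq by simp
      then show "x \<in> f ` ?W" using v by blast
    qed
  qed
  have cW: "card ?W = card R"
    using fW card_image[OF inj_on_subset[OF inj Wsub]] card_image[of Orig R] by (simp add: inj_on_def)
  have "two_packing V E ?W" using pack[OF Wsub] fW pack_Orig by simp
  moreover have "card S' \<le> card ?W" if "two_packing V E S'" for S'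
  proof -
    have S': "S' \<subseteq> V" using that unfolding two_packing_def by simp
    have "two_packing V' E' (f ` S')" using pack[OF S'] that by simp
    then have "card (f ` S') \<le> card R" using pack_le by blast
    then show ?thesis using cW card_image[OF inj_on_subset[OF inj S']] by simp
  qed
  ultimately show ?thesis unfolding max_two_packing_def by blast
qed


lemma tree_triangle:
  assumes T: "tree V E" and e: "{a, b} \<in> E" "{b, c} \<in> E" "{c, a} \<in> E" and d: "a \<noteq> c"
  shows False
proof -
  have g: "graph V E" using T unfolding tree_def by simp
  have "a \<in> V" "b \<in> V" "c \<in> V" "a \<noteq> b" "b \<noteq> c" using graph_edge[OF g] e by auto
  then show False using tree_no_cycle[OF T, of "[a, b, c]"] e d by simp
qed

lemma distinct_concat_map:
  assumes "\<forall>i<k. distinct (g i)" "\<forall>i<k. \<forall>j<k. i \<noteq> j \<longrightarrow> set (g i) \<inter> set (g j) = {}"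
  shows "distinct (concat (map g [0..<k]))"
  using assms
proof (induction k)
  case 0 then show ?case by simp
next
  case (Suc k)
  have IH: "distinct (concat (map g [0..<k]))" using Suc by simp
  have "set (concat (map g [0..<k])) \<inter> set (g k) = {}"
  proof (rule equals0I)
    fix x assume "x \<in> set (concat (map g [0..<k])) \<inter> set (g k)"
    then obtain a where a: "a < k" "x \<in> set (g a)" "x \<in> set (g k)" by auto
    have "set (g a) \<inter> set (g k) = {}" using Suc.prems(2) a(1) by simp
    then show False using a by blast
  qed
  then show ?case using IH Suc.prems(1) by simp
qed

lemma length_concat_map:
  assumes "\<forall>i<k. g i \<noteq> []"
  shows "length (concat (map g [0..<k])) \<ge> k"
  using assms
proof (induction k)
  case 0 then show ?case by simp
next
  case (Suc k)
  then have "length (concat (map g [0..<k])) \<ge> k" by simp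
  moreover have "length (g k) \<ge> 1" using Suc.prems by (cases "g k") auto
  ultimately show ?case by simp
qed

locale D2 =
  fixes V :: "'a set" and E :: "'a set set" and h :: "'a \<Rightarrow> 'b"
  assumes T: "tree V E" and C6: "card V \<ge> 6" and MP: "max_two_packing V E (weak_supports V E)"
    and H: "inj_on h V"
begin

abbreviation "W \<equiv> weak_supports V E"

lemma G: "graph V E" using T unfolding tree_def by simp
lemma finV: "finite V" using G unfolding graph_def by simp
lemma eV: "{u, v} \<in> E \<Longrightarrow> u \<in> V" "{u, v} \<in> E \<Longrightarrow> v \<in> V" "{u, v} \<in> E \<Longrightarrow> u \<noteq> v"
  using graph_edge[OF G] by auto
lemma esym: "{u, v} \<in> E \<Longrightarrow> {v, u} \<in> E" by (simp add: insert_commute)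
lemma WV: "W \<subseteq> V" unfolding weak_supports_def by auto
lemma finW: "finite W" using WV finV finite_subset by blast

lemma packW: "two_packing V E W" using MP unfolding max_two_packing_def by simp
lemma pack: "s \<in> W \<Longrightarrow> t \<in> W \<Longrightarrow> s \<noteq> t \<Longrightarrow> \<not> cl V E s t"
  using packW unfolding two_packing_cl by blast
lemma pack_adj: assumes "s \<in> W" "t \<in> W" shows "{s, t} \<notin> E"
proof
  assume e: "{s, t} \<in> E"
  then have "s \<noteq> t" "s \<in> V" "t \<in> V" using eV by auto
  then show False using pack[OF assms] e unfolding cl_def by blast
qed
lemma pack_common: assumes "s \<in> W" "t \<in> W" "{s, w} \<in> E" "{w, t} \<in> E" shows "s = t"
proof (rule ccontr)
  assume "s \<noteq> t"
  moreover have "s \<in> V" "t \<in> V" "w \<in> V" using eV assms by auto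
  ultimately show False using pack[OF assms(1,2)] assms(3,4) unfolding cl_def by blast
qed

lemma leaf_nb: assumes "leaf V E l" "{l, u} \<in> E" "{l, w} \<in> E" shows "u = w"
proof -
  have "card (neighbors V E l) = 1" using assms(1) unfolding leaf_def degree_def by simp
  then obtain z where z: "neighbors V E l = {z}" by (rule card_1_singletonE)
  have "u \<in> neighbors V E l" "w \<in> neighbors V E l" using assms eV unfolding neighbors_def by auto
  then show ?thesis using z by simp
qed

lemma K2: assumes "leaf V E a" "leaf V E b" "{a, b} \<in> E" shows False
proof -
  have "V \<subseteq> {a, b}"
  proof
    fix v assume v: "v \<in> V"
    have aV: "a \<in> V" using assms eV by auto
    obtain xs where xs: "walk V E xs" "hd xs = a" "last xs = v"
      using T aV v unfolding tree_def connected_graph_def by blast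
    have ne: "xs \<noteq> []" using xs unfolding walk_def by simp
    have all: "\<forall>i. i < length xs \<longrightarrow> xs ! i \<in> {a, b}"
    proof (intro allI)
      fix i show "i < length xs \<longrightarrow> xs ! i \<in> {a, b}"
      proof (induction i)
        case 0 then show ?case using xs(2) ne by (simp add: hd_conv_nth)
      next
        case (Suc i)
        show ?case
        proof
          assume si: "Suc i < length xs"
          then have ei: "{xs ! i, xs ! Suc i} \<in> E" using xs(1) unfolding walk_def by blast
          have "xs ! i \<in> {a, b}" using Suc.IH si by simp
          then consider "xs ! i = a" | "xs ! i = b" by blast
          then show "xs ! Suc i \<in> {a, b}"
          proof cases
            case 1 then have "xs ! Suc i = b" using leaf_nb[OF assms(1)] ei assms(3) by metis
            then show ?thesis by simp
          next
            case 2 then have "xs ! Suc i = a" using leaf_nb[OF assms(2)] ei esym[OF assms(3)] by metis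
            then show ?thesis by simp
          qed
        qed
      qed
    qed
    have "length xs - 1 < length xs" using ne by simp
    then have "xs ! (length xs - 1) \<in> {a, b}" using all by blast
    then show "v \<in> {a, b}" using xs(3) ne by (simp add: last_conv_nth)
  qed
  moreover have "card {a, b} \<le> 2" by (cases "a = b") auto
  ultimately have "card V \<le> 2" using card_mono[of "{a, b}" V] by simp
  then show False using C6 by simp
qed

definition lf :: "'a \<Rightarrow> 'a" where
  "lf s = the_elem {u \<in> neighbors V E s. leaf V E u}"

lemma lf_set: assumes "s \<in> W" shows "{u \<in> neighbors V E s. leaf V E u} = {lf s}"
proof -
  have "card {u \<in> neighbors V E s. leaf V E u} = 1" using assms unfolding weak_supports_def by simp
  then obtain z where z: "{u \<in> neighbors V E s. leaf V E u} = {z}" by (rule card_1_singletonE)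
  then show ?thesis unfolding lf_def by simp
qed

lemma lf_props: assumes "s \<in> W" shows "lf s \<in> V" "{s, lf s} \<in> E" "leaf V E (lf s)"
  using lf_set[OF assms] unfolding neighbors_def by auto

lemma lf_uniq: assumes "s \<in> W" "{s, u} \<in> E" "leaf V E u" shows "u = lf s"
proof -
  have "u \<in> {u \<in> neighbors V E s. leaf V E u}" using assms eV unfolding neighbors_def by auto
  then show ?thesis using lf_set[OF assms(1)] by simp
qed

lemma lf_nb: assumes "s \<in> W" "{lf s, w} \<in> E" shows "w = s"
  using leaf_nb[OF lf_props(3)[OF assms(1)] assms(2) esym[OF lf_props(2)[OF assms(1)]]] .

lemma lf_inj: assumes "s \<in> W" "t \<in> W" "lf s = lf t" shows "s = t"
proof -
  have "{lf s, t} \<in> E" using esym[OF lf_props(2)[OF assms(2)]] assms(3) by simp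
  from lf_nb[OF assms(1) this] show ?thesis by (rule sym)
qed

lemma lf_notW: assumes "s \<in> W" "t \<in> W" shows "lf s \<noteq> t"
proof
  assume st: "lf s = t"
  have "{lf s, lf t} \<in> E" using lf_props(2)[OF assms(2)] st by simp
  from lf_nb[OF assms(1) this] have "lf t = s" .
  then have "leaf V E s" "leaf V E t" using lf_props(3)[OF assms(1)] lf_props(3)[OF assms(2)] st by auto
  then show False using K2 lf_props(2)[OF assms(1)] st by simp
qed

lemma lf_pack: assumes "s \<in> W" "t \<in> W" "s \<noteq> t" shows "\<not> cl V E (lf s) (lf t)"
proof
  assume "cl V E (lf s) (lf t)"
  then consider "lf s = lf t" | "{lf s, lf t} \<in> E" | w where "{lf s, w} \<in> E" "{w, lf t} \<in> E"
    unfolding cl_def by blast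
  then show False
  proof cases
    case 1 then show False using lf_inj assms by blast
  next
    case 2 from lf_nb[OF assms(1) this] have "lf t = s" .
    then show False using lf_notW[OF assms(2,1)] by simp
  next
    case 3
    have "w = s" using lf_nb[OF assms(1) 3(1)] .
    moreover have "w = t" using lf_nb[OF assms(2) esym[OF 3(2)]] .
    ultimately show False using assms(3) by simp
  qed
qed

lemma bigger_pairs:
  assumes A: "\<forall>s\<in>W. \<not> cl V E w (lf s)" and u: "u \<in> insert w (lf ` W)" and v: "v \<in> insert w (lf ` W)"
    and uv: "u \<noteq> v"
  shows "\<not> cl V E u v"
proof -
  consider (a) "u = w" | (b) s where "s \<in> W" "u = lf s" using u by auto
  note cu = this
  consider (c) "v = w" | (d) t where "t \<in> W" "v = lf t" using v by auto
  note cv = this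
  show ?thesis
  proof (cases rule: cu)
    case a
    then show ?thesis
    proof (cases rule: cv)
      case c then show ?thesis using uv \<open>u = w\<close> by simp
    next
      case (d t) then show ?thesis using A \<open>u = w\<close> by simp
    qed
  next
    case (b s)
    then show ?thesis
    proof (cases rule: cv)
      case c then show ?thesis using A b cl_sym by metis
    next
      case (d t)
      have "s \<noteq> t" using uv b d by auto
      then show ?thesis using lf_pack b d by simp
    qed
  qed
qed

lemma bigger: assumes "w \<in> V" "w \<notin> lf ` W" "\<forall>s\<in>W. \<not> cl V E w (lf s)" shows False
proof -
  let ?S = "insert w (lf ` W)"
  have sub: "?S \<subseteq> V" using assms(1) lf_props(1) by auto
  have "\<forall>u\<in>?S. \<forall>v\<in>?S. u \<noteq> v \<longrightarrow> \<not> cl V E u v"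
    using bigger_pairs[OF assms(3)] by blast
  then have "two_packing V E ?S" using sub unfolding two_packing_cl by simp
  then have le: "card ?S \<le> card W" using MP unfolding max_two_packing_def by blast
  have "inj_on lf W" using lf_inj by (auto simp: inj_on_def)
  then have "card (lf ` W) = card W" by (rule card_image)
  moreover have "card ?S = Suc (card (lf ` W))" using assms(2) finW by simp
  ultimately show False using le by simp
qed

lemma cover: assumes "w \<in> V" "w \<notin> W" shows "\<exists>s\<in>W. {w, s} \<in> E"
proof (rule ccontr)
  assume n: "\<not> (\<exists>s\<in>W. {w, s} \<in> E)"
  have "w \<notin> lf ` W"
  proof
    assume "w \<in> lf ` W"
    then obtain s where "s \<in> W" "w = lf s" by auto
    then show False using n esym[OF lf_props(2)] by auto
  qed
  moreover have "\<forall>s\<in>W. \<not> cl V E w (lf s)"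
  proof
    fix s assume s: "s \<in> W"
    show "\<not> cl V E w (lf s)"
    proof
      assume "cl V E w (lf s)"
      then consider "w = lf s" | "{w, lf s} \<in> E" | z where "{w, z} \<in> E" "{z, lf s} \<in> E"
        unfolding cl_def by blast
      then show False
      proof cases
        case 1 then show False using n s esym[OF lf_props(2)[OF s]] by auto
      next
        case 2 then have "w = s" using lf_nb[OF s esym[OF 2]] by simp
        then show False using assms(2) s by simp
      next
        case 3 then have "z = s" using lf_nb[OF s esym[OF 3(2)]] by simp
        then show False using 3(1) n s by auto
      qed
    qed
  qed
  ultimately show False using bigger assms(1) by blast
qed

lemma leaves: assumes l: "leaf V E l" shows "\<exists>s\<in>W. l = lf s"
proof -
  have "card (neighbors V E l) = 1" using l unfolding leaf_def degree_def by simp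
  then obtain u where u: "neighbors V E l = {u}" by (rule card_1_singletonE)
  then have lu: "{l, u} \<in> E" unfolding neighbors_def by auto
  show ?thesis
  proof (cases "u \<in> W")
    case True
    then have "l = lf u" using lf_uniq esym[OF lu] l by blast
    then show ?thesis using True by blast
  next
    case False
    have lV: "l \<in> V" using l unfolding leaf_def by simp
    have nl: "l \<noteq> lf s" if "s \<in> W" for s
    proof
      assume "l = lf s"
      then have "{lf s, u} \<in> E" using lu by simp
      from lf_nb[OF that this] have "u = s" .
      then show False using False that by simp
    qed
    have "l \<notin> lf ` W" using nl by auto
    moreover have "\<forall>s\<in>W. \<not> cl V E l (lf s)"
    proof
      fix s assume s: "s \<in> W"
      show "\<not> cl V E l (lf s)"
      proof
        assume "cl V E l (lf s)"
        then consider "l = lf s" | "{l, lf s} \<in> E" | z where "{l, z} \<in> E" "{z, lf s} \<in> E"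
          unfolding cl_def by blast
        then show False
        proof cases
          case 1 then show False using nl s by simp
        next
          case 2
          then have "l = s" using lf_nb[OF s esym[OF 2]] by simp
          moreover have "lf s = u" using leaf_nb[OF l 2 lu] .
          ultimately show False using K2[OF l lf_props(3)[OF s]] 2 by simp
        next
          case 3
          then have "z = s" using lf_nb[OF s esym[OF 3(2)]] by simp
          moreover have "z = u" using leaf_nb[OF l 3(1) lu] .
          ultimately show False using False s by simp
        qed
      qed
    qed
    ultimately show ?thesis using bigger lV by blast
  qed
qed

lemma W_notleaf: assumes "s \<in> W" shows "\<not> leaf V E s"
  using K2 lf_props[OF assms] by blast

definition XX :: "'a set" where "XX = V - W - lf ` W"

definition ow :: "'a \<Rightarrow> 'a" where "ow x = (SOME s. s \<in> W \<and> {x, s} \<in> E)"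

lemma ow: assumes "x \<in> V" "x \<notin> W" shows "ow x \<in> W" "{x, ow x} \<in> E"
proof -
  have "\<exists>s. s \<in> W \<and> {x, s} \<in> E" using cover[OF assms] by blast
  then have "ow x \<in> W \<and> {x, ow x} \<in> E" unfolding ow_def by (rule someI_ex)
  then show "ow x \<in> W" "{x, ow x} \<in> E" by auto
qed

lemma ow_uniq: assumes "x \<in> V" "x \<notin> W" "s \<in> W" "{x, s} \<in> E" shows "s = ow x"
  using pack_common[OF assms(3) ow(1)[OF assms(1,2)] esym[OF assms(4)] ow(2)[OF assms(1,2)]] .

lemma ow_lf: assumes "s \<in> W" shows "ow (lf s) = s"
proof -
  have "lf s \<notin> W" using lf_notW assms by blast
  then show ?thesis using ow_uniq[OF lf_props(1)[OF assms] _ assms esym[OF lf_props(2)[OF assms]]] by simp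
qed

lemma XX_simp: "x \<in> XX \<longleftrightarrow> x \<in> V \<and> x \<notin> W \<and> x \<notin> lf ` W" unfolding XX_def by blast

lemma XX_ow: "x \<in> XX \<Longrightarrow> ow x \<in> W" "x \<in> XX \<Longrightarrow> {x, ow x} \<in> E"
  using ow XX_simp by auto

lemma XX_notleaf: "x \<in> XX \<Longrightarrow> \<not> leaf V E x" using leaves XX_simp by blast

lemma XX_nb: assumes "x \<in> XX" "{x, y} \<in> E" "y \<noteq> ow x" shows "y \<in> XX"
proof -
  have x: "x \<in> V" "x \<notin> W" using assms(1) XX_simp by auto
  have yV: "y \<in> V" using eV assms(2) by auto
  have "y \<notin> W" using ow_uniq[OF x] assms by blast
  moreover have "y \<notin> lf ` W"
  proof
    assume "y \<in> lf ` W"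
    then obtain t where t: "t \<in> W" "y = lf t" by auto
    then have "{lf t, x} \<in> E" using esym[OF assms(2)] by simp
    from lf_nb[OF t(1) this] have "x = t" .
    then show False using x t by simp
  qed
  ultimately show ?thesis using yV XX_simp by simp
qed

lemma XX_WD: "x \<in> XX \<Longrightarrow> x \<notin> W" using XX_simp by simp

lemma XX_nb_own: assumes "x \<in> XX" "y \<in> XX" "{x, y} \<in> E" shows "ow x \<noteq> ow y"
proof
  assume eq: "ow x = ow y"
  have "{y, ow x} \<in> E" using XX_ow(2)[OF assms(2)] eq by simp
  moreover have "{ow x, x} \<in> E" using esym[OF XX_ow(2)[OF assms(1)]] .
  moreover have "x \<noteq> ow x" using XX_WD[OF assms(1)] XX_ow(1)[OF assms(1)] by auto
  ultimately show False using tree_triangle[OF T assms(3)] by blast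
qed

lemma XX_other: assumes "x \<in> XX" shows "\<exists>y\<in>XX. {x, y} \<in> E \<and> ow y \<noteq> ow x"
proof -
  have xV: "x \<in> V" using assms XX_simp by simp
  have e: "{x, ow x} \<in> E" using XX_ow(2)[OF assms] .
  have "ow x \<in> V" using eV(2)[OF e] .
  then have o: "ow x \<in> neighbors V E x" unfolding neighbors_def using e by (intro CollectI conjI)
  have "\<exists>y\<in>neighbors V E x. y \<noteq> ow x"
  proof (rule ccontr)
    assume n: "\<not> (\<exists>y\<in>neighbors V E x. y \<noteq> ow x)"
    have sub: "neighbors V E x \<subseteq> {ow x}"
    proof
      fix y assume y: "y \<in> neighbors V E x"
      have "y = ow x"
      proof (rule ccontr)
        assume "y \<noteq> ow x"
        then show False using n y by metis
      qed
      then show "y \<in> {ow x}" by simp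
    qed
    have "{ow x} \<subseteq> neighbors V E x" using o by simp
    then have eq: "neighbors V E x = {ow x}" using sub by (rule subset_antisym[rotated])
    have "card (neighbors V E x) = 1" unfolding eq by simp
    then have "leaf V E x" using xV unfolding leaf_def degree_def by simp
    then show False using XX_notleaf[OF assms] by simp
  qed
  then obtain y where y: "{x, y} \<in> E" "y \<noteq> ow x" unfolding neighbors_def by auto
  have yX: "y \<in> XX" using XX_nb[OF assms y] .
  then show ?thesis using y XX_nb_own[OF assms yX y(1)] by auto
qed

lemma W_nb: assumes "s \<in> W" "{s, y} \<in> E" shows "y = lf s \<or> (y \<in> XX \<and> ow y = s)"
proof -
  have yV: "y \<in> V" using eV assms(2) by auto
  have yW: "y \<notin> W" using pack_adj assms by blast
  show ?thesis
  proof (cases "y \<in> lf ` W")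
    case True
    then obtain t where t: "t \<in> W" "y = lf t" by auto
    then have "{lf t, s} \<in> E" using esym[OF assms(2)] by simp
    from lf_nb[OF t(1) this] have "s = t" .
    then show ?thesis using t by simp
  next
    case False
    then have "y \<in> XX" using yV yW XX_simp by simp
    moreover have "s = ow y" using ow_uniq[OF yV yW assms(1) esym[OF assms(2)]] .
    ultimately show ?thesis by simp
  qed
qed

definition adjS :: "'a \<Rightarrow> 'a \<Rightarrow> bool" where
  "adjS a b \<longleftrightarrow> (\<exists>x y. x \<in> XX \<and> y \<in> XX \<and> {x, y} \<in> E \<and> ow x = a \<and> ow y = b)"

lemma adjS_sym: "adjS a b \<Longrightarrow> adjS b a"
  unfolding adjS_def using esym by blast

lemma adjS_W: assumes "adjS a b" shows "a \<in> W" "b \<in> W" "a \<noteq> b"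
proof -
  obtain x y where xy: "x \<in> XX" "y \<in> XX" "{x, y} \<in> E" "ow x = a" "ow y = b"
    using assms unfolding adjS_def by blast
  show "a \<in> W" using XX_ow(1)[OF xy(1)] xy(4) by simp
  show "b \<in> W" using XX_ow(1)[OF xy(2)] xy(5) by simp
  show "a \<noteq> b" using XX_nb_own[OF xy(1,2,3)] xy(4,5) by simp
qed

definition Ablk :: "'a \<Rightarrow> 'a set" where
  "Ablk x = {t. \<exists>y\<in>XX. {x, y} \<in> E \<and> ow y = t}"

lemma Ablk_W: "Ablk x \<subseteq> W"
  unfolding Ablk_def using XX_ow(1) by auto

lemma Ablk_ne: assumes "x \<in> XX" shows "Ablk x \<noteq> {}"
proof -
  obtain y where "y \<in> XX" "{x, y} \<in> E" using XX_other[OF assms] by blast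
  then have "ow y \<in> Ablk x" unfolding Ablk_def by blast
  then show ?thesis by blast
qed

lemma Ablk_adj: assumes "x \<in> XX" "t \<in> Ablk x" shows "adjS (ow x) t"
  using assms unfolding Ablk_def adjS_def by blast

lemma Ablk_own: assumes "x \<in> XX" shows "ow x \<notin> Ablk x"
proof
  assume "ow x \<in> Ablk x"
  then obtain y where "y \<in> XX" "{x, y} \<in> E" "ow y = ow x" unfolding Ablk_def by blast
  then show False using XX_nb_own[OF assms] by metis
qed

lemma XX_V: "x \<in> XX \<Longrightarrow> x \<in> V" using XX_simp by simp

lemma quad:
  assumes a: "a \<in> W" and X: "p \<in> XX" "q \<in> XX" "y \<in> XX" and o: "ow p = a" "ow q = a"
    and pq: "p \<noteq> q" and e: "{p, y} \<in> E" "{q, y} \<in> E"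
  shows False
proof -
  have e1: "{a, p} \<in> E" using esym[OF XX_ow(2)[OF X(1)]] o by simp
  have e3: "{y, q} \<in> E" using esym[OF e(2)] .
  have e4: "{q, a} \<in> E" using XX_ow(2)[OF X(2)] o by simp
  have d: "a \<noteq> p" "a \<noteq> y" "a \<noteq> q" using X a XX_WD by auto
  have d2: "p \<noteq> y" "y \<noteq> q" using eV(3)[OF e(1)] eV(3)[OF e3] by auto
  have v: "a \<in> V" "p \<in> V" "q \<in> V" "y \<in> V" using a WV X XX_V by auto
  have "walk V E [a, p, y, q]" using v e1 e(1) e3 by simp
  moreover have "distinct [a, p, y, q]" using d d2 pq by simp
  ultimately show False using tree_no_cycle[OF T, of "[a, p, y, q]"] e4 by simp
qed

lemma hex:
  assumes ab: "a \<in> W" "b \<in> W" "a \<noteq> b" and X: "p \<in> XX" "q \<in> XX" "r \<in> XX" "s \<in> XX"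
    and o: "ow p = a" "ow q = a" "ow r = b" "ow s = b" and pq: "p \<noteq> q" "r \<noteq> s"
    and e: "{p, r} \<in> E" "{q, s} \<in> E"
  shows False
proof -
  have e2: "{r, b} \<in> E" using XX_ow(2)[OF X(3)] o by simp
  have e3: "{b, s} \<in> E" using esym[OF XX_ow(2)[OF X(4)]] o by simp
  have e4: "{s, q} \<in> E" using esym[OF e(2)] .
  have e5: "{q, a} \<in> E" using XX_ow(2)[OF X(2)] o by simp
  have e6: "{a, p} \<in> E" using esym[OF XX_ow(2)[OF X(1)]] o by simp
  have d1: "p \<noteq> r" "p \<noteq> s" "q \<noteq> r" "q \<noteq> s" using o ab(3) by auto
  have d2: "p \<noteq> a" "p \<noteq> b" "q \<noteq> a" "q \<noteq> b" "r \<noteq> a" "r \<noteq> b" "s \<noteq> a" "s \<noteq> b"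
    using X ab XX_WD by auto
  have v: "a \<in> V" "b \<in> V" "p \<in> V" "q \<in> V" "r \<in> V" "s \<in> V" using ab WV X XX_V by auto
  have "walk V E [p, r, b, s, q, a]" using v e(1) e2 e3 e4 e5 by simp
  moreover have "distinct [p, r, b, s, q, a]" using d1 d2 pq ab(3) by auto
  ultimately show False using tree_no_cycle[OF T, of "[p, r, b, s, q, a]"] e6 by simp
qed

lemma Ablk_disj: assumes X: "x \<in> XX" "x' \<in> XX" and o: "ow x = ow x'" and d: "x \<noteq> x'"
  shows "Ablk x \<inter> Ablk x' = {}"
proof (rule equals0I)
  fix t assume "t \<in> Ablk x \<inter> Ablk x'"
  then obtain y y' where y: "y \<in> XX" "{x, y} \<in> E" "ow y = t" and y': "y' \<in> XX" "{x', y'} \<in> E" "ow y' = t"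
    unfolding Ablk_def by blast
  show False
  proof (cases "y = y'")
    case True
    then show False using quad[OF XX_ow(1)[OF X(1)] X y(1) refl o[symmetric] d y(2)] y'(2) by simp
  next
    case False
    have tW: "t \<in> W" using XX_ow(1)[OF y(1)] y(3) by simp
    have "ow x \<noteq> t" using XX_nb_own[OF X(1) y(1) y(2)] y(3) by simp
    then show False using hex[OF XX_ow(1)[OF X(1)] tW _ X y(1) y'(1) refl o[symmetric] y(3) y'(3) d False y(2) y'(2)]
      by simp
  qed
qed

lemma XX_edge_iff: assumes X: "u \<in> XX" "v \<in> XX"
  shows "{u, v} \<in> E \<longleftrightarrow> adjS (ow u) (ow v) \<and> ow v \<in> Ablk u \<and> ow u \<in> Ablk v"
proof
  assume e: "{u, v} \<in> E"
  then show "adjS (ow u) (ow v) \<and> ow v \<in> Ablk u \<and> ow u \<in> Ablk v"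
    using X esym[OF e] unfolding adjS_def Ablk_def by blast
next
  assume h: "adjS (ow u) (ow v) \<and> ow v \<in> Ablk u \<and> ow u \<in> Ablk v"
  then obtain y where y: "y \<in> XX" "{u, y} \<in> E" "ow y = ow v" unfolding Ablk_def by blast
  obtain z where z: "z \<in> XX" "{v, z} \<in> E" "ow z = ow u" using h unfolding Ablk_def by blast
  have ne: "ow u \<noteq> ow v" using adjS_W(3) h by blast
  show "{u, v} \<in> E"
  proof (cases "y = v")
    case True then show ?thesis using y(2) by simp
  next
    case yv: False
    show ?thesis
    proof (cases "z = u")
      case True then show ?thesis using esym[OF z(2)] by simp
    next
      case False
      have "z \<noteq> u" using False .
      then have False
        using hex[OF XX_ow(1)[OF X(1)] XX_ow(1)[OF X(2)] ne X(1) z(1) y(1) X(2) refl z(3) y(3) refl _ yv y(2) esym[OF z(2)]]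
        by auto
      then show ?thesis ..
    qed
  qed
qed

definition pr :: "'a \<Rightarrow> 'a" where "pr v = (if v \<in> W then v else ow v)"

lemma pr_W: "v \<in> V \<Longrightarrow> pr v \<in> W"
  unfolding pr_def using ow(1) by auto

lemma lf_notin: "s \<in> W \<Longrightarrow> lf s \<notin> W" using lf_notW by blast

lemma pr_lf: "s \<in> W \<Longrightarrow> pr (lf s) = s"
  unfolding pr_def using lf_notin ow_lf by simp

lemma notW_XX: assumes "u \<in> V" "u \<notin> W" "{u, v} \<in> E" "v \<notin> W" shows "u \<in> XX"
proof -
  have "u \<notin> lf ` W"
  proof
    assume "u \<in> lf ` W"
    then obtain t where t: "u = lf t" "t \<in> W" by (rule imageE)
    then have "{lf t, v} \<in> E" using assms(3) by simp
    from lf_nb[OF t(2) this] have "v = t" .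
    then show False using t assms(4) by simp
  qed
  then show ?thesis using assms XX_simp by simp
qed

lemma pr_edge: assumes e: "{u, v} \<in> E" shows "pr u = pr v \<or> adjS (pr u) (pr v)"
proof -
  have uV: "u \<in> V" and vV: "v \<in> V" using eV e by auto
  show ?thesis
  proof (cases "u \<in> W")
    case True
    have "y = lf u \<or> (y \<in> XX \<and> ow y = u)" if "y = v" for y using W_nb[OF True e] that by simp
    then have "pr v = u" using pr_lf[OF True] XX_WD[of v] unfolding pr_def by auto
    moreover have "pr u = u" using True unfolding pr_def by simp
    ultimately show ?thesis by simp
  next
    case uW: False
    show ?thesis
    proof (cases "v \<in> W")
      case True
      have "u = lf v \<or> (u \<in> XX \<and> ow u = v)" using W_nb[OF True esym[OF e]] .
      then have "pr u = v" using pr_lf[OF True] XX_WD[of u] unfolding pr_def by auto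
      moreover have "pr v = v" using True unfolding pr_def by simp
      ultimately show ?thesis by simp
    next
      case False
      have uX: "u \<in> XX" using notW_XX[OF uV uW e False] .
      have vX: "v \<in> XX" using notW_XX[OF vV False esym[OF e] uW] .
      have "adjS (ow u) (ow v)" unfolding adjS_def using uX vX e by blast
      then show ?thesis using uW False unfolding pr_def by simp
    qed
  qed
qed


definition RR :: "'b set" where "RR = h ` W"
definition ER :: "'b set set" where "ER = {{h a, h b} | a b. adjS a b}"
definition PP :: "'b \<Rightarrow> 'b set set" where "PP n = {h ` Ablk x | x. x \<in> XX \<and> h (ow x) = n}"

lemma hW: "inj_on h W" using inj_on_subset[OF H WV] .
lemma h_eq: "a \<in> W \<Longrightarrow> b \<in> W \<Longrightarrow> h a = h b \<longleftrightarrow> a = b"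
  using hW unfolding inj_on_def by blast

lemma ER_iff: assumes "a \<in> W" "b \<in> W" shows "{h a, h b} \<in> ER \<longleftrightarrow> adjS a b"
proof
  assume "{h a, h b} \<in> ER"
  then obtain a' b' where ab: "{h a, h b} = {h a', h b'}" "adjS a' b'" unfolding ER_def by blast
  have W': "a' \<in> W" "b' \<in> W" using adjS_W ab(2) by auto
  from ab(1) consider "h a = h a'" "h b = h b'" | "h a = h b'" "h b = h a'"
    by (auto simp: doubleton_eq_iff)
  then show "adjS a b"
  proof cases
    case 1 then have "a = a'" "b = b'" using h_eq assms W' by auto
    then show ?thesis using ab(2) by simp
  next
    case 2 then have "a = b'" "b = a'" using h_eq assms W' by auto
    then show ?thesis using adjS_sym[OF ab(2)] by simp
  qed
next
  assume "adjS a b" then show "{h a, h b} \<in> ER" unfolding ER_def by blast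
qed

lemma graphR: "graph RR ER"
  unfolding graph_def
proof (intro conjI ballI)
  show "finite RR" unfolding RR_def using finW by simp
next
  fix e assume "e \<in> ER"
  then obtain a b where ab: "e = {h a, h b}" "adjS a b" unfolding ER_def by blast
  have W: "a \<in> W" "b \<in> W" "a \<noteq> b" using adjS_W[OF ab(2)] by auto
  then have "h a \<noteq> h b" using h_eq by blast
  moreover have "h a \<in> RR" "h b \<in> RR" using W unfolding RR_def by auto
  ultimately show "\<exists>u v. e = {u, v} \<and> u \<noteq> v \<and> u \<in> RR \<and> v \<in> RR" using ab(1) by blast
qed

lemma nbrs_R: assumes s: "s \<in> W" shows "neighbors RR ER (h s) = h ` {t \<in> W. adjS s t}"
proof (rule set_eqI)
  fix m show "m \<in> neighbors RR ER (h s) \<longleftrightarrow> m \<in> h ` {t \<in> W. adjS s t}"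
  proof
    assume "m \<in> neighbors RR ER (h s)"
    then have m: "m \<in> RR" "{h s, m} \<in> ER" unfolding neighbors_def by auto
    then obtain t where t: "t \<in> W" "m = h t" unfolding RR_def by blast
    then have "adjS s t" using ER_iff[OF s t(1)] m(2) by simp
    then show "m \<in> h ` {t \<in> W. adjS s t}" using t by blast
  next
    assume "m \<in> h ` {t \<in> W. adjS s t}"
    then obtain t where t: "t \<in> W" "adjS s t" "m = h t" by blast
    then have "{h s, m} \<in> ER" using ER_iff[OF s t(1)] by simp
    moreover have "m \<in> RR" using t unfolding RR_def by blast
    ultimately show "m \<in> neighbors RR ER (h s)" unfolding neighbors_def by simp
  qed
qed

lemma PP_eq: assumes s: "s \<in> W" shows "PP (h s) = {h ` Ablk x | x. x \<in> XX \<and> ow x = s}"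
proof -
  have "h (ow x) = h s \<longleftrightarrow> ow x = s" if "x \<in> XX" for x
    using h_eq[OF XX_ow(1)[OF that] s] .
  then show ?thesis unfolding PP_def by blast
qed

lemma partR: assumes s: "s \<in> W" shows "partition_on (neighbors RR ER (h s)) (PP (h s))"
proof (rule partition_onI)
  show "\<Union> (PP (h s)) = neighbors RR ER (h s)"
  proof (rule set_eqI)
    fix m show "m \<in> \<Union> (PP (h s)) \<longleftrightarrow> m \<in> neighbors RR ER (h s)"
    proof
      assume "m \<in> \<Union> (PP (h s))"
      then obtain x where x: "x \<in> XX" "ow x = s" "m \<in> h ` Ablk x" unfolding PP_eq[OF s] by blast
      then obtain t where t: "t \<in> Ablk x" "m = h t" by blast
      have "t \<in> W" using Ablk_W t(1) by blast
      moreover have "adjS s t" using Ablk_adj[OF x(1) t(1)] x(2) by simp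
      ultimately show "m \<in> neighbors RR ER (h s)" unfolding nbrs_R[OF s] using t(2) by blast
    next
      assume "m \<in> neighbors RR ER (h s)"
      then obtain t where t: "t \<in> W" "adjS s t" "m = h t" unfolding nbrs_R[OF s] by blast
      then obtain x y where xy: "x \<in> XX" "y \<in> XX" "{x, y} \<in> E" "ow x = s" "ow y = t"
        unfolding adjS_def by blast
      then have "t \<in> Ablk x" unfolding Ablk_def by blast
      then have "m \<in> h ` Ablk x" using t(3) by blast
      moreover have "h ` Ablk x \<in> PP (h s)" unfolding PP_eq[OF s] using xy by blast
      ultimately show "m \<in> \<Union> (PP (h s))" by blast
    qed
  qed
next
  fix p q assume p: "p \<in> PP (h s)" and q: "q \<in> PP (h s)" and pq: "p \<noteq> q"
  obtain x where x: "x \<in> XX" "ow x = s" "p = h ` Ablk x" using p unfolding PP_eq[OF s] by blast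
  obtain x' where x': "x' \<in> XX" "ow x' = s" "q = h ` Ablk x'" using q unfolding PP_eq[OF s] by blast
  have "x \<noteq> x'" using pq x x' by auto
  then have "Ablk x \<inter> Ablk x' = {}" using Ablk_disj[OF x(1) x'(1)] x(2) x'(2) by simp
  moreover have "h ` (Ablk x \<inter> Ablk x') = h ` Ablk x \<inter> h ` Ablk x'"
    by (rule inj_on_image_Int[OF hW Ablk_W Ablk_W])
  ultimately have "h ` Ablk x \<inter> h ` Ablk x' = {}" by simp
  then show "disjnt p q" using x(3) x'(3) unfolding disjnt_def by simp
next
  show "{} \<notin> PP (h s)"
  proof
    assume "{} \<in> PP (h s)"
    then obtain x where "x \<in> XX" "{} = h ` Ablk x" unfolding PP_eq[OF s] by blast
    then show False using Ablk_ne by simp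
  qed
qed

lemma W_ne: "W \<noteq> {}"
proof -
  have "V \<noteq> {}" using C6 by auto
  then obtain w where w: "w \<in> V" by blast
  show ?thesis
  proof (cases "w \<in> W")
    case True then show ?thesis by blast
  next
    case False then show ?thesis using cover[OF w] by blast
  qed
qed

lemma connR: "connected_graph RR ER"
  unfolding connected_graph_def
proof (intro ballI)
  fix m n assume m: "m \<in> RR" and n: "n \<in> RR"
  obtain a where a: "a \<in> W" "m = h a" using m unfolding RR_def by blast
  obtain b where b: "b \<in> W" "n = h b" using n unfolding RR_def by blast
  have aV: "a \<in> V" and bV: "b \<in> V" using a b WV by auto
  obtain xs where xs: "walk V E xs" "hd xs = a" "last xs = b"
    using T aV bV unfolding tree_def connected_graph_def by blast
  have ne: "xs \<noteq> []" and sV: "set xs \<subseteq> V" using xs(1) unfolding walk_def by auto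
  let ?ys = "map (\<lambda>v. h (pr v)) xs"
  have "?ys \<noteq> []" using ne by simp
  moreover have "set ?ys \<subseteq> RR" using sV pr_W unfolding RR_def by auto
  moreover have "\<forall>i. Suc i < length ?ys \<longrightarrow> ?ys ! i = ?ys ! Suc i \<or> {?ys ! i, ?ys ! Suc i} \<in> ER"
  proof (intro allI impI)
    fix i assume i: "Suc i < length ?ys"
    then have e: "{xs ! i, xs ! Suc i} \<in> E" using xs(1) unfolding walk_def by simp
    have W2: "pr (xs ! i) \<in> W" "pr (xs ! Suc i) \<in> W" using pr_W eV e by auto
    have "pr (xs ! i) = pr (xs ! Suc i) \<or> adjS (pr (xs ! i)) (pr (xs ! Suc i))" using pr_edge[OF e] .
    then show "?ys ! i = ?ys ! Suc i \<or> {?ys ! i, ?ys ! Suc i} \<in> ER"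
      using ER_iff[OF W2] i by auto
  qed
  ultimately obtain zs where zs: "walk RR ER zs" "hd zs = hd ?ys" "last zs = last ?ys"
    using walk_stutter[of ?ys RR ER] by blast
  have "hd ?ys = m" using ne xs(2) a unfolding pr_def by (simp add: hd_map)
  moreover have "last ?ys = n" using ne xs(3) b unfolding pr_def by (simp add: last_map)
  ultimately show "\<exists>xs. walk RR ER xs \<and> hd xs = m \<and> last xs = n" using zs by metis
qed


lemma acycR: "\<not> has_cycle RR ER"
proof
  assume "has_cycle RR ER"
  then obtain c where c: "walk RR ER c" "length c \<ge> 3" "distinct c" "{last c, hd c} \<in> ER"
    unfolding has_cycle_def by blast
  define k where "k = length c"
  have k3: "k \<ge> 3" using c(2) k_def by simp
  have cne: "c \<noteq> []" using k3 k_def by auto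
  have cR: "c ! i \<in> h ` W" if "i < k" for i
  proof -
    have "c ! i \<in> set c" using that k_def by simp
    then show ?thesis using c(1) unfolding walk_def RR_def by blast
  qed
  define d where "d = map (inv_into W h) c"
  have dW: "d ! i \<in> W" if "i < k" for i
    using inv_into_into[OF cR[OF that]] that k_def unfolding d_def by simp
  have hd: "h (d ! i) = c ! i" if "i < k" for i
    using f_inv_into_f[OF cR[OF that]] that k_def unfolding d_def by simp
  have dinj: "i = j" if "i < k" "j < k" "d ! i = d ! j" for i j
  proof -
    have "c ! i = c ! j" using hd[OF that(1)] hd[OF that(2)] that(3) by simp
    then show ?thesis using nth_eq_iff_index_eq[OF c(3)] that(1,2) k_def by simp
  qed
  define nx where "nx i = (if Suc i = k then 0 else Suc i)" for i
  have nxk: "nx i < k" if "i < k" for i using that k3 unfolding nx_def by auto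
  have adj: "adjS (d ! i) (d ! nx i)" if i: "i < k" for i
  proof -
    have "{c ! i, c ! nx i} \<in> ER"
    proof (cases "Suc i = k")
      case True
      then have "length c - 1 = i" using k_def by simp
      then have "last c = c ! i" using cne by (simp add: last_conv_nth)
      moreover have "hd c = c ! nx i" using True cne unfolding nx_def by (simp add: hd_conv_nth)
      ultimately show ?thesis using c(4) by simp
    next
      case False
      then have "Suc i < length c" using i k_def by simp
      then have "{c ! i, c ! Suc i} \<in> ER" using c(1) unfolding walk_def by blast
      then show ?thesis using False unfolding nx_def by simp
    qed
    then have "{h (d ! i), h (d ! nx i)} \<in> ER" using hd[OF i] hd[OF nxk[OF i]] by simp
    then show ?thesis using ER_iff[OF dW[OF i] dW[OF nxk[OF i]]] by simp
  qed
  have "\<forall>i. \<exists>p. i < k \<longrightarrow> (fst p \<in> XX \<and> snd p \<in> XX \<and> {fst p, snd p} \<in> E \<and> ow (fst p) = d ! i \<and> ow (snd p) = d ! nx i)"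
  proof
    fix i show "\<exists>p. i < k \<longrightarrow> (fst p \<in> XX \<and> snd p \<in> XX \<and> {fst p, snd p} \<in> E \<and> ow (fst p) = d ! i \<and> ow (snd p) = d ! nx i)"
    proof (cases "i < k")
      case True
      then obtain x y where "x \<in> XX" "y \<in> XX" "{x, y} \<in> E" "ow x = d ! i" "ow y = d ! nx i"
        using adj[OF True] unfolding adjS_def by blast
      then show ?thesis by (intro exI[of _ "(x, y)"]) simp
    next
      case False then show ?thesis by simp
    qed
  qed
  from choice[OF this] obtain g where g: "\<forall>i. i < k \<longrightarrow> (fst (g i) \<in> XX \<and> snd (g i) \<in> XX \<and> {fst (g i), snd (g i)} \<in> E \<and> ow (fst (g i)) = d ! i \<and> ow (snd (g i)) = d ! nx i)"
    by blast
  define ex where "ex i = fst (g i)" for i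
  define ey where "ey i = snd (g i)" for i
  have exy: "ex i \<in> XX" "ey i \<in> XX" "{ex i, ey i} \<in> E" "ow (ex i) = d ! i" "ow (ey i) = d ! nx i"
    if "i < k" for i
    using g that unfolding ex_def ey_def by auto
  define pv where "pv i = (if i = 0 then k - 1 else i - 1)" for i
  have pv: "pv i < k" "nx (pv i) = i" if "i < k" for i
    using that k3 unfolding pv_def nx_def by auto
  define Y where "Y i = ey (pv i)" for i
  have Y: "Y i \<in> XX" "ow (Y i) = d ! i" if "i < k" for i
    using exy(2)[OF pv(1)[OF that]] exy(5)[OF pv(1)[OF that]] pv(2)[OF that] unfolding Y_def by auto
  define seg where "seg i = (if Y i = ex i then [ex i] else [Y i, d ! i, ex i])" for i
  have seg_ne: "seg i \<noteq> []" for i unfolding seg_def by simp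
  have seg_last: "last (seg i) = ex i" for i unfolding seg_def by simp
  have seg_hd: "hd (seg i) = Y i" for i unfolding seg_def by simp
  have seg_sub: "set (seg i) \<subseteq> {Y i, d ! i, ex i}" for i unfolding seg_def by auto
  have prd: "pr (d ! i) = d ! i" if "i < k" for i using dW[OF that] unfolding pr_def by simp
  have prY: "pr (Y i) = d ! i" if "i < k" for i using XX_WD[OF Y(1)[OF that]] Y(2)[OF that] unfolding pr_def by simp
  have prex: "pr (ex i) = d ! i" if "i < k" for i using XX_WD[OF exy(1)[OF that]] exy(4)[OF that] unfolding pr_def by simp
  have seg_pr: "pr z = d ! i" if "i < k" "z \<in> set (seg i)" for i z
    using seg_sub[of i] that prd prY prex by auto
  have seg_walk: "walk V E (seg i)" if i: "i < k" for i
  proof (cases "Y i = ex i")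
    case True then show ?thesis using XX_V[OF exy(1)[OF i]] unfolding seg_def by simp
  next
    case False
    have e1: "{Y i, d ! i} \<in> E" using XX_ow(2)[OF Y(1)[OF i]] Y(2)[OF i] by simp
    have e2: "{d ! i, ex i} \<in> E" using esym[OF XX_ow(2)[OF exy(1)[OF i]]] exy(4)[OF i] by simp
    have "Y i \<in> V" "d ! i \<in> V" "ex i \<in> V" using XX_V Y(1)[OF i] dW[OF i] WV exy(1)[OF i] by auto
    then show ?thesis using False e1 e2 unfolding seg_def by simp
  qed
  have seg_dist: "distinct (seg i)" if i: "i < k" for i
  proof (cases "Y i = ex i")
    case True then show ?thesis unfolding seg_def by simp
  next
    case False
    have "Y i \<noteq> d ! i" using XX_WD[OF Y(1)[OF i]] dW[OF i] by auto
    moreover have "d ! i \<noteq> ex i" using XX_WD[OF exy(1)[OF i]] dW[OF i] by auto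
    ultimately show ?thesis using False unfolding seg_def by simp
  qed
  define L where "L = concat (map seg [0..<k])"
  have wL: "walk V E L" unfolding L_def
  proof (rule walk_concat)
    show "map seg [0..<k] \<noteq> []" using k3 by simp
    show "\<forall>s\<in>set (map seg [0..<k]). s \<noteq> [] \<and> walk V E s" using seg_ne seg_walk by auto
    show "\<forall>j. Suc j < length (map seg [0..<k]) \<longrightarrow>
        {last (map seg [0..<k] ! j), hd (map seg [0..<k] ! Suc j)} \<in> E"
    proof (intro allI impI)
      fix j assume j: "Suc j < length (map seg [0..<k])"
      then have jk: "Suc j < k" "j < k" by auto
      have "pv (Suc j) = j" unfolding pv_def by simp
      then have "Y (Suc j) = ey j" unfolding Y_def by simp
      then have "{last (seg j), hd (seg (Suc j))} \<in> E" using seg_last seg_hd exy(3)[OF jk(2)] by simp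
      then show "{last (map seg [0..<k] ! j), hd (map seg [0..<k] ! Suc j)} \<in> E" using jk by simp
    qed
  qed
  have dL: "distinct L" unfolding L_def
  proof (rule distinct_concat_map)
    show "\<forall>i<k. distinct (seg i)" using seg_dist by blast
    show "\<forall>i<k. \<forall>j<k. i \<noteq> j \<longrightarrow> set (seg i) \<inter> set (seg j) = {}"
    proof (intro allI impI)
      fix i j assume ij: "i < k" "j < k" "i \<noteq> j"
      show "set (seg i) \<inter> set (seg j) = {}"
      proof (rule equals0I)
        fix z assume "z \<in> set (seg i) \<inter> set (seg j)"
        then have z: "z \<in> set (seg i)" "z \<in> set (seg j)" by auto
        have "d ! i = pr z" using seg_pr[OF ij(1) z(1)] by simp
        also have "\<dots> = d ! j" using seg_pr[OF ij(2) z(2)] .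
        finally show False using dinj ij by blast
      qed
    qed
  qed
  have lL: "length L \<ge> 3" using length_concat_map[of k seg] seg_ne k3 unfolding L_def by auto
  have kk: "k = Suc (k - 1)" using k3 by simp
  have "[0..<k] = [0..<k - 1] @ [k - 1]" using kk upt_Suc[of 0 "k - 1"] by simp
  then have "L = concat (map seg [0..<k - 1]) @ seg (k - 1)" unfolding L_def by simp
  then have lastL: "last L = ex (k - 1)" using seg_ne[of "k - 1"] seg_last by simp
  have "[0..<k] = 0 # [1..<k]" using k3 upt_conv_Cons[of 0 k] by simp
  then have "L = seg 0 @ concat (map seg [1..<k])" unfolding L_def by simp
  then have "hd L = Y 0" using seg_ne[of 0] seg_hd by simp
  moreover have "Y 0 = ey (k - 1)" unfolding Y_def pv_def by simp
  ultimately have hdL: "hd L = ey (k - 1)" by simp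
  have "{last L, hd L} \<in> E" using exy(3)[of "k - 1"] k3 lastL hdL by simp
  then show False using tree_no_cycle[OF T wL dL lL] by simp
qed

lemma treeR: "tree RR ER"
  unfolding tree_def using graphR connR acycR W_ne unfolding RR_def by simp

lemma cardW2: "card W \<ge> 2"
proof -
  obtain s where s: "s \<in> W" using W_ne by blast
  have sV: "s \<in> V" using s WV by blast
  have l: "lf s \<in> neighbors V E s" using lf_props[OF s] unfolding neighbors_def by simp
  have "\<exists>y\<in>neighbors V E s. y \<noteq> lf s"
  proof (rule ccontr)
    assume n: "\<not> (\<exists>y\<in>neighbors V E s. y \<noteq> lf s)"
    have sub: "neighbors V E s \<subseteq> {lf s}"
    proof
      fix y assume y: "y \<in> neighbors V E s"
      have "y = lf s"
      proof (rule ccontr)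
        assume "y \<noteq> lf s"
        then show False using n y by metis
      qed
      then show "y \<in> {lf s}" by simp
    qed
    have "{lf s} \<subseteq> neighbors V E s" using l by simp
    then have eq: "neighbors V E s = {lf s}" using sub by (rule subset_antisym[rotated])
    have "card (neighbors V E s) = 1" unfolding eq by simp
    then have "leaf V E s" using sV unfolding leaf_def degree_def by simp
    then show False using W_notleaf[OF s] by simp
  qed
  then obtain y where y: "{s, y} \<in> E" "y \<noteq> lf s" unfolding neighbors_def by auto
  then have yX: "y \<in> XX" "ow y = s" using W_nb[OF s y(1)] by auto
  obtain z where z: "z \<in> XX" "ow z \<noteq> ow y" using XX_other[OF yX(1)] by blast
  have "ow z \<in> W" using XX_ow(1)[OF z(1)] .
  moreover have "ow z \<noteq> s" using z yX by simp
  ultimately have "{s, ow z} \<subseteq> W" "card {s, ow z} = 2" using s by auto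
  then show ?thesis using card_mono[OF finW] by metis
qed

definition F :: "'a \<Rightarrow> 'b sv" where
  "F v = (if v \<in> W then Orig (h v) else if v \<in> lf ` W then One (h (ow v)) else Part (h (ow v)) (h ` Ablk v))"

lemma F_W: "v \<in> W \<Longrightarrow> F v = Orig (h v)" unfolding F_def by simp
lemma F_L: assumes "s \<in> W" shows "F (lf s) = One (h s)"
  using lf_notin[OF assms] ow_lf[OF assms] assms unfolding F_def by simp
lemma F_X: "x \<in> XX \<Longrightarrow> F x = Part (h (ow x)) (h ` Ablk x)" unfolding F_def XX_simp by simp

lemma classes:
  assumes "v \<in> V"
  obtains (cW) "v \<in> W" | (cL) s where "s \<in> W" "v = lf s" | (cX) "v \<in> XX"
  using assms XX_simp by blast

lemma F_inj: "inj_on F V"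
proof (rule inj_onI)
  fix u v assume u: "u \<in> V" and v: "v \<in> V" and eq: "F u = F v"
  show "u = v"
  using u proof (cases rule: classes)
    case cW
    show ?thesis
    using v proof (cases rule: classes)
      case cW then show ?thesis using \<open>u \<in> W\<close> eq F_W h_eq by auto
    next
      case (cL t) then show ?thesis using \<open>u \<in> W\<close> eq F_W F_L by auto
    next
      case cX then show ?thesis using \<open>u \<in> W\<close> eq F_W F_X by auto
    qed
  next
    case (cL s)
    show ?thesis
    using v proof (cases rule: classes)
      case cW then show ?thesis using cL eq F_W F_L by auto
    next
      case (cL t) then show ?thesis using \<open>s \<in> W\<close> \<open>u = lf s\<close> eq F_L h_eq by auto
    next
      case cX then show ?thesis using cL eq F_X F_L by auto
    qed
  next
    case cX
    show ?thesis
    using v proof (cases rule: classes)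
      case cW then show ?thesis using \<open>u \<in> XX\<close> eq F_W F_X by auto
    next
      case (cL t) then show ?thesis using \<open>u \<in> XX\<close> eq F_X F_L by auto
    next
      case cX
      have "h (ow u) = h (ow v)" "h ` Ablk u = h ` Ablk v" using eq F_X \<open>u \<in> XX\<close> cX by auto
      then have o: "ow u = ow v" and A: "Ablk u = Ablk v"
        using h_eq XX_ow(1) \<open>u \<in> XX\<close> cX inj_on_image_eq_iff[OF hW Ablk_W Ablk_W] by auto
      show ?thesis
      proof (rule ccontr)
        assume "u \<noteq> v"
        then have "Ablk u \<inter> Ablk v = {}" using Ablk_disj \<open>u \<in> XX\<close> cX o by blast
        then show False using A Ablk_ne[OF cX] by simp
      qed
    qed
  qed
qed

lemma F_img: "F ` V = subdiv_V RR ER PP"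
proof
  show "F ` V \<subseteq> subdiv_V RR ER PP"
  proof
    fix y assume "y \<in> F ` V"
    then obtain v where v: "v \<in> V" "y = F v" by blast
    show "y \<in> subdiv_V RR ER PP"
    using v(1) proof (cases rule: classes)
      case cW then show ?thesis using v F_W unfolding RR_def by (simp add: sV_simps)
    next
      case (cL s) then show ?thesis using v F_L unfolding RR_def by (simp add: sV_simps)
    next
      case cX
      have "h (ow v) \<in> RR" using XX_ow(1)[OF cX] unfolding RR_def by simp
      moreover have "h ` Ablk v \<in> PP (h (ow v))" unfolding PP_def using cX by blast
      ultimately show ?thesis using v F_X[OF cX] by (simp add: sV_simps)
    qed
  qed
next
  show "subdiv_V RR ER PP \<subseteq> F ` V"
  proof
    fix y assume y: "y \<in> subdiv_V RR ER PP"
    show "y \<in> F ` V"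
    proof (cases y)
      case (Orig n)
      then obtain s where "s \<in> W" "n = h s" using y unfolding RR_def by (auto simp: sV_simps)
      then show ?thesis using Orig F_W WV by (metis image_eqI subsetD)
    next
      case (One n)
      then obtain s where s: "s \<in> W" "n = h s" using y unfolding RR_def by (auto simp: sV_simps)
      then have "y = F (lf s)" using One F_L by simp
      then show ?thesis using lf_props(1)[OF s(1)] by blast
    next
      case (Part n B)
      then have "B \<in> PP n" using y by (simp add: sV_simps)
      then obtain x where x: "x \<in> XX" "h (ow x) = n" "B = h ` Ablk x" unfolding PP_def by blast
      then have "y = F x" using Part F_X by simp
      then show ?thesis using XX_V[OF x(1)] by blast
    qed
  qed
qed

definition rk :: "'a \<Rightarrow> nat" where
  "rk v = (if v \<in> W then 0 else if v \<in> lf ` W then 1 else 2)"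

lemma rk_L: "s \<in> W \<Longrightarrow> rk (lf s) = 1" unfolding rk_def using lf_notin by simp
lemma rk_X: "x \<in> XX \<Longrightarrow> rk x = 2" unfolding rk_def XX_simp by simp
lemma rk_W: "s \<in> W \<Longrightarrow> rk s = 0" unfolding rk_def by simp

lemma edge_core: assumes u: "u \<in> V" and v: "v \<in> V" and r: "rk u \<le> rk v"
  shows "{u, v} \<in> E \<longleftrightarrow> {F u, F v} \<in> subdiv_E RR ER PP"
using u proof (cases rule: classes)
  case cW
  show ?thesis
  using v proof (cases rule: classes)
    case W2: cW
    have "{u, v} \<notin> E" using pack_adj[OF cW W2] .
    moreover have "{F u, F v} \<notin> subdiv_E RR ER PP" unfolding F_W[OF cW] F_W[OF W2] by (rule sE_OO)
    ultimately show ?thesis by simp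
  next
    case (cL t)
    have "{u, v} \<in> E \<longleftrightarrow> u = t"
    proof
      assume "{u, v} \<in> E"
      then have "{lf t, u} \<in> E" using cL esym by simp
      then show "u = t" using lf_nb[OF cL(1)] by simp
    next
      assume "u = t" then show "{u, v} \<in> E" using lf_props(2)[OF cL(1)] cL by simp
    qed
    moreover have "h u \<in> RR" using cW unfolding RR_def by simp
    moreover have "{F u, F v} \<in> subdiv_E RR ER PP \<longleftrightarrow> h u = h t \<and> h u \<in> RR"
      unfolding F_W[OF cW] cL(2) F_L[OF cL(1)] by (rule sE_O1)
    ultimately show ?thesis using h_eq[OF cW cL(1)] by simp
  next
    case cX
    have vW: "v \<notin> W" using XX_WD[OF cX] .
    have "{u, v} \<in> E \<longleftrightarrow> u = ow v"
    proof
      assume "{u, v} \<in> E"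
      then show "u = ow v" using ow_uniq[OF v vW cW] esym by simp
    next
      assume "u = ow v" then show "{u, v} \<in> E" using esym[OF XX_ow(2)[OF cX]] by simp
    qed
    moreover have "h u \<in> RR" using cW unfolding RR_def by simp
    moreover have "h ` Ablk v \<in> PP (h (ow v))" unfolding PP_def using cX by blast
    moreover have "{F u, F v} \<in> subdiv_E RR ER PP \<longleftrightarrow> h u = h (ow v) \<and> h u \<in> RR \<and> h ` Ablk v \<in> PP (h u)"
      unfolding F_W[OF cW] F_X[OF cX] by (rule sE_OP)
    ultimately show ?thesis using h_eq[OF cW XX_ow(1)[OF cX]] by auto
  qed
next
  case (cL s)
  show ?thesis
  using v proof (cases rule: classes)
    case cW
    then show ?thesis using r rk_L[OF cL(1)] rk_W[OF cW] cL by simp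
  next
    case L2: (cL t)
    have "{u, v} \<notin> E"
    proof
      assume "{u, v} \<in> E"
      then have "{lf s, lf t} \<in> E" using cL L2 by simp
      from lf_nb[OF cL(1) this] have "lf t = s" .
      then show False using lf_notW[OF L2(1) cL(1)] by simp
    qed
    moreover have "{F u, F v} \<notin> subdiv_E RR ER PP" unfolding cL(2) L2(2) F_L[OF cL(1)] F_L[OF L2(1)] by (rule sE_11)
    ultimately show ?thesis by simp
  next
    case cX
    have "{u, v} \<notin> E"
    proof
      assume "{u, v} \<in> E"
      then have "{lf s, v} \<in> E" using cL by simp
      from lf_nb[OF cL(1) this] have "v = s" .
      then show False using XX_WD[OF cX] cL(1) by simp
    qed
    moreover have "{F u, F v} \<notin> subdiv_E RR ER PP" unfolding cL(2) F_L[OF cL(1)] F_X[OF cX] by (rule sE_1P)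
    ultimately show ?thesis by simp
  qed
next
  case cX
  show ?thesis
  using v proof (cases rule: classes)
    case cW
    then show ?thesis using r rk_X[OF cX] rk_W[OF cW] by simp
  next
    case (cL t)
    then show ?thesis using r rk_X[OF cX] rk_L[OF cL(1)] cL by simp
  next
    case X2: cX
    have oW: "ow u \<in> W" "ow v \<in> W" using XX_ow(1) cX X2 by auto
    have p1: "h ` Ablk u \<in> PP (h (ow u))" unfolding PP_def using cX by blast
    have p2: "h ` Ablk v \<in> PP (h (ow v))" unfolding PP_def using X2 by blast
    have m1: "h (ow v) \<in> h ` Ablk u \<longleftrightarrow> ow v \<in> Ablk u"
      using inj_on_image_mem_iff[OF hW oW(2) Ablk_W] .
    have m2: "h (ow u) \<in> h ` Ablk v \<longleftrightarrow> ow u \<in> Ablk v"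
      using inj_on_image_mem_iff[OF hW oW(1) Ablk_W] .
    have "{F u, F v} \<in> subdiv_E RR ER PP \<longleftrightarrow> {h (ow u), h (ow v)} \<in> ER \<and> h ` Ablk u \<in> PP (h (ow u))
        \<and> h ` Ablk v \<in> PP (h (ow v)) \<and> h (ow v) \<in> h ` Ablk u \<and> h (ow u) \<in> h ` Ablk v"
      unfolding F_X[OF cX] F_X[OF X2] by (rule sE_PP)
    then have "{F u, F v} \<in> subdiv_E RR ER PP \<longleftrightarrow> adjS (ow u) (ow v) \<and> ow v \<in> Ablk u \<and> ow u \<in> Ablk v"
      using p1 p2 m1 m2 ER_iff[OF oW] by simp
    then show ?thesis using XX_edge_iff[OF cX X2] by simp
  qed
qed

lemma edge_all: assumes u: "u \<in> V" and v: "v \<in> V"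
  shows "{u, v} \<in> E \<longleftrightarrow> {F u, F v} \<in> subdiv_E RR ER PP"
proof (cases "rk u \<le> rk v")
  case True then show ?thesis using edge_core[OF u v] by simp
next
  case False
  then have "{v, u} \<in> E \<longleftrightarrow> {F v, F u} \<in> subdiv_E RR ER PP" using edge_core[OF v u] by simp
  then show ?thesis by (simp add: insert_commute)
qed

lemma isoR: "graph_iso V E (subdiv_V RR ER PP) (subdiv_E RR ER PP)"
  unfolding graph_iso_def
proof (intro exI conjI)
  show "bij_betw F V (subdiv_V RR ER PP)" unfolding bij_betw_def using F_inj F_img by simp
  show "\<forall>u\<in>V. \<forall>v\<in>V. {u, v} \<in> E \<longleftrightarrow> {F u, F v} \<in> subdiv_E RR ER PP" using edge_all by blast
qed

lemma nbr_partsR: "nbr_partitions RR ER PP"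
  unfolding nbr_partitions_def
proof
  fix n assume "n \<in> RR"
  then obtain s where "s \<in> W" "n = h s" unfolding RR_def by blast
  then show "partition_on (neighbors RR ER n) (PP n)" using partR by simp
qed

lemma cardR: "card RR \<ge> 2"
  unfolding RR_def using card_image[OF hW] cardW2 by simp


end


lemma dir2:
  assumes "tree V E" "card V \<ge> 6" "max_two_packing V E (weak_supports V E)"
  shows "in_O' V E"
proof -
  have fin: "finite V" using assms(1) unfolding tree_def graph_def by simp
  obtain h :: "'a \<Rightarrow> nat" where hi: "inj_on h V"
    using finite_imp_inj_to_nat_seg[OF fin] by auto
  interpret D2 V E h using assms hi by unfold_locales
  have "tree RR ER \<and> card RR \<ge> 2 \<and> nbr_partitions RR ER PP \<and>
      graph_iso V E (subdiv_V RR ER PP) (subdiv_E RR ER PP)"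
    using treeR cardR nbr_partsR isoR by simp
  then show ?thesis unfolding in_O'_def by (intro exI)
qed

theorem mainTheorem5:
  fixes V :: "'a set" and E :: "'a set set"
  assumes "tree V E" and "card V \<ge> 6"
  shows "in_O' V E \<longleftrightarrow> max_two_packing V E (weak_supports V E)"
proof
  assume "in_O' V E"
  then show "max_two_packing V E (weak_supports V E)" by (rule dir1)
next
  assume "max_two_packing V E (weak_supports V E)"
  then show "in_O' V E" using dir2[OF assms] by simp
qed

end
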